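(* Let $T$ be a complex torus, $\Gamma$ a finite subgroup of $\mathrm{Aut}(T)=\mathrm{Aut}_0(T)\ltimes t(T)$, $\mathbb T=T\setminus\Gamma\cdot\{0\}$, and $\pi:\mathbb T\to\mathbb T/\Gamma$ the canonical projection. Then the number of branch points of $\pi$ is $0$ if $\Gamma\subseteq t(T)$; $2$ if $\Gamma=C_\ell\ltimes1$ with $\ell\in\{3,4,6\}$, or $\Gamma=C_3\ltimes(C_2\times C_2)$; $3$ if $\Gamma=C_2\ltimes C_N$ ($N\ge1$).
   Context: $\mathrm{Aut}(T)$ is the group of biholomorphisms of $T$, $\mathrm{Aut}_0(T)$ the subgroup fixing $0$ (the maps $z\mapsto\epsilon z$ for roots of unity $\epsilon$ with $\epsilon\Lambda=\Lambda$, $T=\mathbb C/\Lambda$), and $t(T)$ the subgroup of translations. Writing $\Gamma=G\ltimes K$ means $G\subseteq\mathrm{Aut}_0(T)$, $K\subseteq t(T)$ and $\Gamma$ is generated by $G$ and $K$; $C_m$ denotes a cyclic group of order $m$ and $1$ the trivial group. A branch point of $\pi$ is the image of a point of $\mathbb T$ with nontrivial stabilizer in $\Gamma$. *)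

theory Defs
  imports Complex_Main "HOL-Library.FuncSet"
begin

definition lattice :: "complex \<Rightarrow> complex \<Rightarrow> complex set" where
  "lattice \<omega>1 \<omega>2 = {of_int m * \<omega>1 + of_int n * \<omega>2 | m n. True}"

definition periods_indep :: "complex \<Rightarrow> complex \<Rightarrow> bool" where
  "periods_indep \<omega>1 \<omega>2 \<longleftrightarrow> \<omega>1 \<noteq> 0 \<and> Im (\<omega>2 / \<omega>1) \<noteq> 0"

definition coset :: "complex set \<Rightarrow> complex \<Rightarrow> complex set" where
  "coset L z = (\<lambda>l. z + l) ` L"

definition torus :: "complex set \<Rightarrow> complex set set" where
  "torus L = range (coset L)"

definition aff :: "complex set \<Rightarrow> complex \<Rightarrow> complex \<Rightarrow> complex set \<Rightarrow> complex set" where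
  "aff L \<epsilon> b = (\<lambda>P\<in>torus L. (\<lambda>z. \<epsilon> * z + b) ` P)"

definition idT :: "complex set \<Rightarrow> complex set \<Rightarrow> complex set" where
  "idT L = aff L 1 0"

definition lattice_unit :: "complex set \<Rightarrow> complex \<Rightarrow> bool" where
  "lattice_unit L \<epsilon> \<longleftrightarrow> (\<exists>n>0. \<epsilon> ^ n = 1) \<and> (\<lambda>z. \<epsilon> * z) ` L = L"

definition Aut :: "complex set \<Rightarrow> (complex set \<Rightarrow> complex set) set" where
  "Aut L = {aff L \<epsilon> b | \<epsilon> b. lattice_unit L \<epsilon>}"

definition Aut0 :: "complex set \<Rightarrow> (complex set \<Rightarrow> complex set) set" where
  "Aut0 L = {aff L \<epsilon> 0 | \<epsilon>. lattice_unit L \<epsilon>}"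

definition transl :: "complex set \<Rightarrow> (complex set \<Rightarrow> complex set) set" where
  "transl L = {aff L 1 b | b. True}"

definition compT :: "complex set \<Rightarrow> (complex set \<Rightarrow> complex set) \<Rightarrow> (complex set \<Rightarrow> complex set)
    \<Rightarrow> (complex set \<Rightarrow> complex set)" where
  "compT L f g = compose (torus L) f g"

definition invT :: "complex set \<Rightarrow> (complex set \<Rightarrow> complex set) \<Rightarrow> (complex set \<Rightarrow> complex set)" where
  "invT L f = restrict (inv_into (torus L) f) (torus L)"

definition aut_subgroup :: "complex set \<Rightarrow> (complex set \<Rightarrow> complex set) set \<Rightarrow> bool" where
  "aut_subgroup L H \<longleftrightarrow> H \<subseteq> Aut L \<and> idT L \<in> H \<and>
     (\<forall>f\<in>H. \<forall>g\<in>H. compT L f g \<in> H) \<and> (\<forall>f\<in>H. invT L f \<in> H)"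

definition generated :: "complex set \<Rightarrow> (complex set \<Rightarrow> complex set) set \<Rightarrow> (complex set \<Rightarrow> complex set) set" where
  "generated L S = \<Inter> {H. aut_subgroup L H \<and> S \<subseteq> H}"

definition semidir :: "complex set \<Rightarrow> (complex set \<Rightarrow> complex set) set \<Rightarrow> (complex set \<Rightarrow> complex set) set
    \<Rightarrow> (complex set \<Rightarrow> complex set) set \<Rightarrow> bool" where
  "semidir L \<Gamma> G K \<longleftrightarrow> aut_subgroup L G \<and> aut_subgroup L K \<and> G \<subseteq> Aut0 L \<and> K \<subseteq> transl L
     \<and> \<Gamma> = generated L (G \<union> K)"

definition cyc :: "complex set \<Rightarrow> (complex set \<Rightarrow> complex set) \<Rightarrow> (complex set \<Rightarrow> complex set) set" where
  "cyc L g = {((compT L g) ^^ k) (idT L) | k. True}"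

definition cyclic_of_order :: "complex set \<Rightarrow> (complex set \<Rightarrow> complex set) set \<Rightarrow> nat \<Rightarrow> bool" where
  "cyclic_of_order L G m \<longleftrightarrow> (\<exists>g\<in>Aut L. G = cyc L g) \<and> finite G \<and> card G = m"

definition klein_four :: "complex set \<Rightarrow> (complex set \<Rightarrow> complex set) set \<Rightarrow> bool" where
  "klein_four L K \<longleftrightarrow> (\<exists>a\<in>Aut L. \<exists>b\<in>Aut L. K = {idT L, a, b, compT L a b} \<and> card K = 4 \<and>
      compT L a a = idT L \<and> compT L b b = idT L \<and> compT L a b = compT L b a)"

text \<open>Branch points: images in \<TT>/Gamma of points of \<TT> = T - Gamma.0 with nontrivial stabilizer,
  i.e. Gamma-orbits of such points.\<close>

definition orbit :: "(complex set \<Rightarrow> complex set) set \<Rightarrow> complex set \<Rightarrow> complex set set" where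
  "orbit \<Gamma> P = (\<lambda>\<gamma>. \<gamma> P) ` \<Gamma>"

definition punctured :: "complex set \<Rightarrow> (complex set \<Rightarrow> complex set) set \<Rightarrow> complex set set" where
  "punctured L \<Gamma> = torus L - orbit \<Gamma> (coset L 0)"

definition branch_points :: "complex set \<Rightarrow> (complex set \<Rightarrow> complex set) set \<Rightarrow> complex set set set" where
  "branch_points L \<Gamma> = {orbit \<Gamma> P | P. P \<in> punctured L \<Gamma> \<and> (\<exists>\<gamma>\<in>\<Gamma>. \<gamma> \<noteq> idT L \<and> \<gamma> P = P)}"

end

theory Submission
  imports Defs
begin

locale lat =
  fixes p q :: complex
  assumes D: "Re p * Im q - Im p * Re q \<noteq> 0"
begin

abbreviation "L \<equiv> lattice p q"

definition cx :: "complex \<Rightarrow> real" where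
  "cx z = (Re z * Im q - Im z * Re q) / (Re p * Im q - Im p * Re q)"
definition cy :: "complex \<Rightarrow> real" where
  "cy z = (Re p * Im z - Im p * Re z) / (Re p * Im q - Im p * Re q)"

lemma decomp: "z = of_real (cx z) * p + of_real (cy z) * q"
proof -
  let ?d = "Re p * Im q - Im p * Re q"
  have 1: "Re z * ?d = (Re z * Im q - Im z * Re q) * Re p + (Re p * Im z - Im p * Re z) * Re q"
    by (simp add: algebra_simps)
  have 2: "Im z * ?d = (Re z * Im q - Im z * Re q) * Im p + (Re p * Im z - Im p * Re z) * Im q"
    by (simp add: algebra_simps)
  have "cx z * Re p + cy z * Re q = (Re z * ?d) / ?d"
    unfolding 1 cx_def cy_def by (simp add: add_divide_distrib)
  hence "Re z = cx z * Re p + cy z * Re q" using D by simp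
  moreover have "cx z * Im p + cy z * Im q = (Im z * ?d) / ?d"
    unfolding 2 cx_def cy_def by (simp add: add_divide_distrib)
  hence "Im z = cx z * Im p + cy z * Im q" using D by simp
  ultimately show ?thesis by (intro complex_eqI) auto
qed

lemma uniq0:
  assumes "of_real a * p + of_real b * q = 0"
  shows "a = 0 \<and> b = 0"
proof -
  have r: "a * Re p + b * Re q = 0" and i: "a * Im p + b * Im q = 0"
    using arg_cong[OF assms, of Re] arg_cong[OF assms, of Im] by auto
  have "a * (Re p * Im q - Im p * Re q) = 0"
  proof -
    have "a * (Re p * Im q - Im p * Re q) = Im q * (a * Re p + b * Re q) - Re q * (a * Im p + b * Im q)"
      by (simp add: algebra_simps)
    thus ?thesis using r i by simp
  qed
  moreover have "b * (Re p * Im q - Im p * Re q) = 0"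
  proof -
    have "b * (Re p * Im q - Im p * Re q) = Re p * (a * Im p + b * Im q) - Im p * (a * Re p + b * Re q)"
      by (simp add: algebra_simps)
    thus ?thesis using r i by simp
  qed
  ultimately show ?thesis using D by auto
qed

lemma uniq:
  assumes "of_real a * p + of_real b * q = of_real a' * p + of_real b' * q"
  shows "a = a' \<and> b = b'"
proof -
  have "of_real (a - a') * p + of_real (b - b') * q = 0"
    using assms by (simp add: algebra_simps)
  from uniq0[OF this] show ?thesis by simp
qed

lemma mem: "of_real x * p + of_real y * q \<in> L \<longleftrightarrow> x \<in> \<int> \<and> y \<in> \<int>"
proof
  assume "of_real x * p + of_real y * q \<in> L"
  then obtain m n :: int where "of_real x * p + of_real y * q = of_int m * p + of_int n * q"
    unfolding lattice_def by auto
  hence "of_real x * p + of_real y * q = of_real (of_int m) * p + of_real (of_int n) * q" by simp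
  from uniq[OF this] show "x \<in> \<int> \<and> y \<in> \<int>" by auto
next
  assume "x \<in> \<int> \<and> y \<in> \<int>"
  then obtain m n :: int where "x = of_int m" "y = of_int n" by (auto elim!: Ints_cases)
  thus "of_real x * p + of_real y * q \<in> L" unfolding lattice_def by auto
qed

lemma memz: "z \<in> L \<longleftrightarrow> cx z \<in> \<int> \<and> cy z \<in> \<int>"
  by (subst decomp[of z]) (rule mem)

lemma L0: "0 \<in> L"
proof -
  have "(0::complex) = of_int 0 * p + of_int 0 * q" by simp
  thus ?thesis unfolding lattice_def by blast
qed
lemma Lp: "p \<in> L"
proof -
  have "p = of_int 1 * p + of_int 0 * q" by simp
  thus ?thesis unfolding lattice_def by blast
qed
lemma Lq: "q \<in> L"
proof -
  have "q = of_int 0 * p + of_int 1 * q" by simp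
  thus ?thesis unfolding lattice_def by blast
qed
lemma Ladd: "x \<in> L \<Longrightarrow> y \<in> L \<Longrightarrow> x + y \<in> L"
proof -
  assume "x \<in> L" "y \<in> L"
  then obtain a b c d :: int where "x = of_int a * p + of_int b * q" "y = of_int c * p + of_int d * q"
    unfolding lattice_def by auto
  hence "x + y = of_int (a + c) * p + of_int (b + d) * q" by (simp add: algebra_simps)
  thus "x + y \<in> L" unfolding lattice_def by blast
qed
lemma Lneg: "x \<in> L \<Longrightarrow> - x \<in> L"
proof -
  assume "x \<in> L"
  then obtain a b :: int where "x = of_int a * p + of_int b * q"
    unfolding lattice_def by auto
  hence "- x = of_int (- a) * p + of_int (- b) * q" by (simp add: algebra_simps)
  thus "- x \<in> L" unfolding lattice_def by blast
qed
lemma Ldiff: "x \<in> L \<Longrightarrow> y \<in> L \<Longrightarrow> x - y \<in> L"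
  using Ladd[of x "-y"] Lneg[of y] by simp
lemma Lint: "x \<in> L \<Longrightarrow> of_int k * x \<in> L"
proof -
  assume "x \<in> L"
  then obtain a b :: int where "x = of_int a * p + of_int b * q"
    unfolding lattice_def by auto
  hence "of_int k * x = of_int (k * a) * p + of_int (k * b) * q" by (simp add: algebra_simps)
  thus ?thesis unfolding lattice_def by blast
qed
lemma Lnat: "x \<in> L \<Longrightarrow> of_nat k * x \<in> L"
  using Lint[of x "int k"] by simp

lemma half_p: "p / 2 \<notin> L"
proof
  assume "p / 2 \<in> L"
  moreover have "p / 2 = of_real (1/2) * p + of_real 0 * q" by simp
  ultimately have "(1/2::real) \<in> \<int>" using mem by metis
  thus False using fraction_numeral_not_in_Ints'[of "num.Bit0 num.One"] by simp
qed

definition pt :: "int \<Rightarrow> int \<Rightarrow> int \<Rightarrow> complex" where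
  "pt d a b = (of_int a * p + of_int b * q) / of_int d"

lemma pt_real: "d \<noteq> 0 \<Longrightarrow> pt d a b = of_real (of_int a / of_int d) * p + of_real (of_int b / of_int d) * q"
  by (simp add: pt_def field_simps)

lemma pt_mem: "d > 0 \<Longrightarrow> pt d a b \<in> L \<longleftrightarrow> d dvd a \<and> d dvd b"
proof -
  assume d: "d > 0"
  have "(of_int a / of_int d :: real) \<in> \<int> \<longleftrightarrow> d dvd a" for a
  proof
    assume "(of_int a / of_int d :: real) \<in> \<int>"
    then obtain k where "(of_int a / of_int d :: real) = of_int k" by (auto elim!: Ints_cases)
    hence "of_int a = (of_int (d * k) :: real)" using d by (simp add: field_simps)
    hence "a = d * k" by linarith
    thus "d dvd a" by simp
  next
    assume "d dvd a"
    then obtain k where "a = d * k" by auto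
    thus "(of_int a / of_int d :: real) \<in> \<int>" using d by simp
  qed
  moreover have "pt d a b \<in> L \<longleftrightarrow> (of_int a / of_int d :: real) \<in> \<int> \<and> (of_int b / of_int d :: real) \<in> \<int>"
    using d by (simp only: pt_real[of d] mem)
  ultimately show ?thesis by simp
qed

lemma pt_diff: "pt d a b - pt d c e = pt d (a - c) (b - e)"
  by (simp add: pt_def diff_divide_distrib algebra_simps)
lemma pt_add: "pt d a b + pt d c e = pt d (a + c) (b + e)"
  by (simp add: pt_def add_divide_distrib algebra_simps)
lemma pt_neg: "- pt d a b = pt d (- a) (- b)"
  unfolding pt_def minus_divide_left by (simp add: algebra_simps)
lemma pt_mult: "of_int k * pt d a b = pt d (k * a) (k * b)"
  by (simp add: pt_def algebra_simps)


lemma coset_eq: "coset L z = coset L w \<longleftrightarrow> z - w \<in> L"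
proof
  assume "coset L z = coset L w"
  moreover have "z \<in> coset L z" unfolding coset_def using L0 by force
  ultimately have "z \<in> coset L w" by simp
  then obtain l where "l \<in> L" "z = w + l" unfolding coset_def by auto
  thus "z - w \<in> L" by simp
next
  assume h: "z - w \<in> L"
  show "coset L z = coset L w"
  proof
    show "coset L z \<subseteq> coset L w"
    proof
      fix x assume "x \<in> coset L z"
      then obtain l where l: "l \<in> L" "x = z + l" unfolding coset_def by auto
      hence "x = w + ((z - w) + l)" by simp
      moreover have "(z - w) + l \<in> L" using h l Ladd by blast
      ultimately show "x \<in> coset L w" unfolding coset_def by blast
    qed
  next
    show "coset L w \<subseteq> coset L z"
    proof
      fix x assume "x \<in> coset L w"
      then obtain l where l: "l \<in> L" "x = w + l" unfolding coset_def by auto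
      hence "x = z + (l - (z - w))" by simp
      moreover have "l - (z - w) \<in> L" using h l Ldiff by blast
      ultimately show "x \<in> coset L z" unfolding coset_def by blast
    qed
  qed
qed

lemma coset_torus: "coset L z \<in> torus L" unfolding torus_def by simp

lemma torusE: "P \<in> torus L \<Longrightarrow> (\<And>z. P = coset L z \<Longrightarrow> thesis) \<Longrightarrow> thesis"
  unfolding torus_def by auto

lemma unit_nz: "lattice_unit L e \<Longrightarrow> e \<noteq> 0"
  unfolding lattice_unit_def by (metis power_0_left zero_neq_one neq0_conv)

lemma unit_mem: "lattice_unit L e \<Longrightarrow> x \<in> L \<Longrightarrow> e * x \<in> L"
  unfolding lattice_unit_def by blast

lemma unit_mem_iff: "lattice_unit L e \<Longrightarrow> e * x \<in> L \<longleftrightarrow> x \<in> L"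
proof
  assume u: "lattice_unit L e" and "e * x \<in> L"
  then obtain l where "l \<in> L" "e * x = e * l" unfolding lattice_unit_def by (metis imageE)
  thus "x \<in> L" using unit_nz[OF u] by simp
qed (rule unit_mem)

lemma aff_coset: "lattice_unit L e \<Longrightarrow> aff L e b (coset L z) = coset L (e * z + b)"
proof -
  assume u: "lattice_unit L e"
  have "aff L e b (coset L z) = (\<lambda>w. e * w + b) ` coset L z"
    unfolding aff_def using coset_torus by simp
  also have "\<dots> = (\<lambda>m. (e * z + b) + m) ` ((\<lambda>l. e * l) ` L)"
    unfolding coset_def image_image by (simp add: algebra_simps)
  also have "\<dots> = coset L (e * z + b)"
    using u unfolding lattice_unit_def coset_def by simp
  finally show ?thesis .
qed

lemma aff_torus: "lattice_unit L e \<Longrightarrow> P \<in> torus L \<Longrightarrow> aff L e b P \<in> torus L"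
  by (auto elim!: torusE simp: aff_coset coset_torus)

lemma aff_out: "P \<notin> torus L \<Longrightarrow> aff L e b P = undefined"
  unfolding aff_def by simp

lemma aff_ext:
  assumes "lattice_unit L e" "lattice_unit L e'"
    and "\<And>z. e * z + b - (e' * z + b') \<in> L"
  shows "aff L e b = aff L e' b'"
proof
  fix P show "aff L e b P = aff L e' b' P"
  proof (cases "P \<in> torus L")
    case True
    then obtain z where "P = coset L z" by (auto elim: torusE)
    thus ?thesis using assms by (simp add: aff_coset coset_eq)
  qed (simp add: aff_out)
qed

lemma aff_eq:
  assumes u: "lattice_unit L e" "lattice_unit L e'"
  shows "aff L e b = aff L e' b' \<longleftrightarrow> e = e' \<and> b - b' \<in> L"
proof
  assume h: "aff L e b = aff L e' b'"
  have *: "e * z + b - (e' * z + b') \<in> L" for z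
  proof -
    have "aff L e b (coset L z) = aff L e' b' (coset L z)" using h by simp
    thus ?thesis using u by (simp add: aff_coset coset_eq)
  qed
  from *[of 0] have bb: "b - b' \<in> L" by simp
  have "e = e'"
  proof (rule ccontr)
    assume ne: "e \<noteq> e'"
    let ?z = "(p / 2) / (e - e')"
    have "(e * ?z + b - (e' * ?z + b')) - (b - b') \<in> L" using *[of ?z] bb Ldiff by blast
    moreover have "(e * ?z + b - (e' * ?z + b')) - (b - b') = (e - e') * ?z"
    proof -
      have "(e * ?z + b - (e' * ?z + b')) - (b - b') = e * ?z - e' * ?z" by simp
      also have "\<dots> = (e - e') * ?z" by (rule left_diff_distrib[symmetric])
      finally show ?thesis .
    qed
    moreover have "(e - e') * ?z = p / 2"
    proof -
      have "e - e' \<noteq> 0" using ne by simp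
      hence "\<And>X. (e - e') * (X / (e - e')) = X" by simp
      thus ?thesis by blast
    qed
    ultimately show False using half_p by metis
  qed
  thus "e = e' \<and> b - b' \<in> L" using bb by simp
next
  assume "e = e' \<and> b - b' \<in> L"
  thus "aff L e b = aff L e' b'" using u by (intro aff_ext) auto
qed

lemma unit_1: "lattice_unit L 1"
  unfolding lattice_unit_def by auto

lemma unit_m1: "lattice_unit L (-1)"
proof -
  have "(\<lambda>z. - 1 * z) ` L = L"
  proof
    show "(\<lambda>z. - 1 * z) ` L \<subseteq> L" using Lneg by auto
    show "L \<subseteq> (\<lambda>z. - 1 * z) ` L"
    proof
      fix x assume "x \<in> L"
      hence "-x \<in> L" by (rule Lneg)
      moreover have "x = - 1 * (- x)" by simp
      ultimately show "x \<in> (\<lambda>z. - 1 * z) ` L" by blast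
    qed
  qed
  moreover have "(-1::complex) ^ 2 = 1" by simp
  ultimately show ?thesis unfolding lattice_unit_def by (metis zero_less_numeral)
qed

lemma unit_mult:
  assumes "lattice_unit L e" "lattice_unit L e'"
  shows "lattice_unit L (e * e')"
proof -
  obtain n where n: "n > 0" "e ^ n = 1" using assms(1) unfolding lattice_unit_def by auto
  obtain m where m: "m > 0" "e' ^ m = 1" using assms(2) unfolding lattice_unit_def by auto
  have "(e * e') ^ (n * m) = 1"
    by (simp add: power_mult_distrib power_mult n m) (metis m(2) power_mult power_one mult.commute)
  moreover have "n * m > 0" using n m by simp
  moreover have "(\<lambda>z. e * e' * z) ` L = L"
  proof -
    have "(\<lambda>z. e * e' * z) ` L = (\<lambda>z. e * z) ` ((\<lambda>z. e' * z) ` L)"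
      by (simp add: image_image mult.assoc)
    thus ?thesis using assms unfolding lattice_unit_def by simp
  qed
  ultimately show ?thesis unfolding lattice_unit_def by blast
qed

lemma unit_pow: "lattice_unit L e \<Longrightarrow> lattice_unit L (e ^ k)"
  by (induction k) (simp_all add: unit_1 unit_mult)

lemma unit_inv:
  assumes "lattice_unit L e"
  shows "lattice_unit L (inverse e)"
proof -
  obtain n where n: "n > 0" "e ^ n = 1" using assms unfolding lattice_unit_def by auto
  have "inverse e ^ n = 1" using n by (simp add: power_inverse)
  moreover have "(\<lambda>z. inverse e * z) ` L = L"
  proof
    show "(\<lambda>z. inverse e * z) ` L \<subseteq> L"
    proof
      fix x assume "x \<in> (\<lambda>z. inverse e * z) ` L"
      then obtain z where z: "z \<in> L" "x = inverse e * z" by auto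
      have "e * x = z" using z unit_nz[OF assms] by simp
      hence "e * x \<in> L" using z(1) by simp
      thus "x \<in> L" using unit_mem_iff[OF assms] by blast
    qed
    show "L \<subseteq> (\<lambda>z. inverse e * z) ` L"
    proof
      fix x assume "x \<in> L"
      hence "e * x \<in> L" using unit_mem[OF assms] by simp
      moreover have "x = inverse e * (e * x)" using unit_nz[OF assms] by simp
      ultimately show "x \<in> (\<lambda>z. inverse e * z) ` L" by blast
    qed
  qed
  ultimately show ?thesis unfolding lattice_unit_def using n by blast
qed

lemma compT_aff:
  assumes "lattice_unit L e" "lattice_unit L e'"
  shows "compT L (aff L e b) (aff L e' b') = aff L (e * e') (e * b' + b)"
proof
  fix P
  show "compT L (aff L e b) (aff L e' b') P = aff L (e * e') (e * b' + b) P"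
  proof (cases "P \<in> torus L")
    case True
    then obtain z where "P = coset L z" by (auto elim: torusE)
    thus ?thesis using assms unit_mult[OF assms] True
      by (simp add: compT_def compose_def aff_coset algebra_simps)
  qed (simp add: compT_def compose_def aff_out)
qed

lemma inj_aff: "lattice_unit L e \<Longrightarrow> inj_on (aff L e b) (torus L)"
proof (rule inj_onI)
  fix P Q assume u: "lattice_unit L e" and P: "P \<in> torus L" and Q: "Q \<in> torus L"
    and eq: "aff L e b P = aff L e b Q"
  obtain z where z: "P = coset L z" using P by (auto elim: torusE)
  obtain w where w: "Q = coset L w" using Q by (auto elim: torusE)
  have "e * z + b - (e * w + b) \<in> L" using eq u by (simp add: z w aff_coset coset_eq)
  hence "e * (z - w) \<in> L" by (simp add: algebra_simps)
  hence "z - w \<in> L" using unit_mem_iff[OF u] by simp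
  thus "P = Q" by (simp add: z w coset_eq)
qed

lemma invT_aff:
  assumes u: "lattice_unit L e"
  shows "invT L (aff L e b) = aff L (inverse e) (- b / e)"
proof
  fix P
  show "invT L (aff L e b) P = aff L (inverse e) (- b / e) P"
  proof (cases "P \<in> torus L")
    case True
    then obtain z where z: "P = coset L z" by (auto elim: torusE)
    have ui: "lattice_unit L (inverse e)" using unit_inv[OF u] .
    have "inv_into (torus L) (aff L e b) P = coset L (inverse e * z + - b / e)"
    proof (rule inv_into_f_eq[OF inj_aff[OF u]])
      show "coset L (inverse e * z + - b / e) \<in> torus L" by (rule coset_torus)
      show "aff L e b (coset L (inverse e * z + - b / e)) = P"
        using u unit_nz[OF u] by (simp add: aff_coset z field_simps)
    qed
    thus ?thesis using True ui by (simp add: invT_def z aff_coset)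
  qed (simp add: invT_def aff_out)
qed


lemma H_subgroup:
  assumes Uu: "\<forall>u\<in>U. lattice_unit L u" and U1: "1 \<in> U"
    and Um: "\<forall>u\<in>U. \<forall>v\<in>U. u * v \<in> U" and Ui: "\<forall>u\<in>U. inverse u \<in> U"
    and BL: "L \<subseteq> B" and Ba: "\<forall>x\<in>B. \<forall>y\<in>B. x + y \<in> B" and Bn: "\<forall>x\<in>B. - x \<in> B"
    and BU: "\<forall>u\<in>U. \<forall>x\<in>B. u * x \<in> B"
  shows "aut_subgroup L {aff L u b | u b. u \<in> U \<and> b \<in> B}"
  unfolding aut_subgroup_def
proof (intro conjI ballI)
  show "{aff L u b | u b. u \<in> U \<and> b \<in> B} \<subseteq> Aut L"
    unfolding Aut_def using Uu by blast
  show "idT L \<in> {aff L u b | u b. u \<in> U \<and> b \<in> B}"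
    unfolding idT_def using U1 BL L0 by blast
next
  fix f g assume f: "f \<in> {aff L u b | u b. u \<in> U \<and> b \<in> B}"
    and g: "g \<in> {aff L u b | u b. u \<in> U \<and> b \<in> B}"
  obtain u b where ub: "f = aff L u b" "u \<in> U" "b \<in> B" using f by blast
  obtain v c where vc: "g = aff L v c" "v \<in> U" "c \<in> B" using g by blast
  have "compT L f g = aff L (u * v) (u * c + b)"
    using ub vc Uu by (simp add: compT_aff)
  moreover have "u * v \<in> U" "u * c + b \<in> B" using ub vc Um Ba BU by auto
  ultimately show "compT L f g \<in> {aff L u b | u b. u \<in> U \<and> b \<in> B}" by blast
next
  fix f assume f: "f \<in> {aff L u b | u b. u \<in> U \<and> b \<in> B}"
  obtain u b where ub: "f = aff L u b" "u \<in> U" "b \<in> B" using f by blast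
  have "invT L f = aff L (inverse u) (- b / u)"
    using ub Uu by (simp add: invT_aff)
  moreover have "- b / u = inverse u * (- b)" by (simp add: field_simps)
  moreover have "inverse u \<in> U" "inverse u * (- b) \<in> B" using ub Ui Bn BU by auto
  ultimately show "invT L f \<in> {aff L u b | u b. u \<in> U \<and> b \<in> B}" by auto
qed

lemma count_bp:
  assumes Uu: "\<forall>u\<in>U. lattice_unit L u" and U1: "1 \<in> U"
    and Um: "\<forall>u\<in>U. \<forall>v\<in>U. u * v \<in> U" and Ui: "\<forall>u\<in>U. inverse u \<in> U"
    and BL: "L \<subseteq> B" and Ba: "\<forall>x\<in>B. \<forall>y\<in>B. x + y \<in> B" and Bn: "\<forall>x\<in>B. - x \<in> B"
    and BU: "\<forall>u\<in>U. \<forall>x\<in>B. u * x \<in> B"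
    and G: "\<Gamma> = {aff L u b | u b. u \<in> U \<and> b \<in> B}"
    and cover: "\<And>z u. z \<notin> B \<Longrightarrow> u \<in> U \<Longrightarrow> u \<noteq> 1 \<Longrightarrow> (1 - u) * z \<in> B
                   \<Longrightarrow> \<exists>r\<in>R. \<exists>v\<in>U. z - v * r \<in> B"
    and inR: "\<And>r. r \<in> R \<Longrightarrow> r \<notin> B \<and> (\<exists>u\<in>U. u \<noteq> 1 \<and> (1 - u) * r \<in> B)"
    and sep: "\<And>r r' u. r \<in> R \<Longrightarrow> r' \<in> R \<Longrightarrow> u \<in> U \<Longrightarrow> r - u * r' \<in> B \<Longrightarrow> r = r'"
  shows "card (branch_points L \<Gamma>) = card R"
proof -
  have Bd: "x \<in> B \<Longrightarrow> y \<in> B \<Longrightarrow> x - y \<in> B" for x y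
    using Ba Bn by (metis diff_conv_add_uminus)
  have B0: "0 \<in> B" using BL L0 by auto
  define Orb where "Orb z = {coset L (u * z + b) | u b. u \<in> U \<and> b \<in> B}" for z
  have orb: "orbit \<Gamma> (coset L z) = Orb z" for z
  proof
    show "orbit \<Gamma> (coset L z) \<subseteq> Orb z"
    proof
      fix X assume "X \<in> orbit \<Gamma> (coset L z)"
      then obtain u b where ub: "u \<in> U" "b \<in> B" "X = aff L u b (coset L z)"
        unfolding orbit_def G by blast
      hence "X = coset L (u * z + b)" using Uu by (simp add: aff_coset)
      thus "X \<in> Orb z" unfolding Orb_def using ub by blast
    qed
    show "Orb z \<subseteq> orbit \<Gamma> (coset L z)"
    proof
      fix X assume "X \<in> Orb z"
      then obtain u b where ub: "u \<in> U" "b \<in> B" "X = coset L (u * z + b)"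
        unfolding Orb_def by blast
      hence "X = aff L u b (coset L z)" using Uu by (simp add: aff_coset)
      moreover have "aff L u b \<in> \<Gamma>" unfolding G using ub by blast
      ultimately show "X \<in> orbit \<Gamma> (coset L z)" unfolding orbit_def by blast
    qed
  qed
  have self: "coset L z \<in> Orb z" for z
  proof -
    have "coset L z = coset L (1 * z + 0)" by simp
    thus ?thesis unfolding Orb_def using U1 B0 by blast
  qed
  have eqv: "Orb z = Orb w \<longleftrightarrow> (\<exists>u\<in>U. z - u * w \<in> B)" for z w
  proof
    assume "Orb z = Orb w"
    hence "coset L z \<in> Orb w" using self[of z] by simp
    then obtain u b where ub: "u \<in> U" "b \<in> B" "coset L z = coset L (u * w + b)"
      unfolding Orb_def by blast
    hence "z - (u * w + b) \<in> B" using BL by (auto simp: coset_eq)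
    hence "z - (u * w + b) + b \<in> B" using ub Ba by blast
    thus "\<exists>u\<in>U. z - u * w \<in> B" using ub by (auto simp: algebra_simps)
  next
    assume "\<exists>u\<in>U. z - u * w \<in> B"
    then obtain u where u: "u \<in> U" "z - u * w \<in> B" by blast
    define c where "c = z - u * w"
    have c: "c \<in> B" using u c_def by simp
    have un: "u \<noteq> 0" using u Uu unit_nz by blast
    show "Orb z = Orb w"
    proof
      show "Orb z \<subseteq> Orb w"
      proof
        fix P assume "P \<in> Orb z"
        then obtain v b where vb: "v \<in> U" "b \<in> B" "P = coset L (v * z + b)"
          unfolding Orb_def by blast
        have eq: "v * z + b = (v * u) * w + (v * c + b)" unfolding c_def by (simp add: algebra_simps)
        have "P = coset L ((v * u) * w + (v * c + b))" by (simp only: vb(3) eq)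
        moreover have "v * u \<in> U" "v * c + b \<in> B" using vb u c Um BU Ba by auto
        ultimately show "P \<in> Orb w" unfolding Orb_def by blast
      qed
    next
      show "Orb w \<subseteq> Orb z"
      proof
        fix P assume "P \<in> Orb w"
        then obtain v b where vb: "v \<in> U" "b \<in> B" "P = coset L (v * w + b)"
          unfolding Orb_def by blast
        have w: "w = inverse u * (z - c)" unfolding c_def using un by (simp add: field_simps)
        have eq: "v * w + b = (v * inverse u) * z + (b - (v * inverse u) * c)" unfolding w
          by (simp add: algebra_simps)
        have "P = coset L ((v * inverse u) * z + (b - (v * inverse u) * c))" by (simp only: vb(3) eq)
        moreover have vi: "v * inverse u \<in> U" using vb u Um Ui by auto
        moreover have "b - (v * inverse u) * c \<in> B" using vi vb c BU Bd by auto
        ultimately show "P \<in> Orb z" unfolding Orb_def by blast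
      qed
    qed
  qed
  have punc: "coset L z \<in> punctured L \<Gamma> \<longleftrightarrow> z \<notin> B" for z
  proof -
    have "coset L z \<in> Orb 0 \<longleftrightarrow> z \<in> B"
    proof
      assume "coset L z \<in> Orb 0"
      then obtain u b where ub: "u \<in> U" "b \<in> B" "coset L z = coset L (u * 0 + b)"
        unfolding Orb_def by blast
      hence "z - b \<in> B" using BL by (auto simp: coset_eq)
      thus "z \<in> B" using ub Ba by (metis diff_add_cancel)
    next
      assume "z \<in> B"
      moreover have "coset L z = coset L (1 * 0 + z)" by simp
      ultimately show "coset L z \<in> Orb 0" unfolding Orb_def using U1 by blast
    qed
    thus ?thesis unfolding punctured_def orb using coset_torus by auto
  qed
  have stab: "(\<exists>\<gamma>\<in>\<Gamma>. \<gamma> \<noteq> idT L \<and> \<gamma> (coset L z) = coset L z) \<longleftrightarrow>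
        (\<exists>u\<in>U. u \<noteq> 1 \<and> (1 - u) * z \<in> B)" for z
  proof
    assume "\<exists>\<gamma>\<in>\<Gamma>. \<gamma> \<noteq> idT L \<and> \<gamma> (coset L z) = coset L z"
    then obtain u b where ub: "u \<in> U" "b \<in> B" "aff L u b \<noteq> idT L"
      "aff L u b (coset L z) = coset L z" unfolding G by blast
    have d: "u * z + b - z \<in> L" using ub Uu by (simp add: aff_coset coset_eq)
    have "u \<noteq> 1"
    proof
      assume "u = 1"
      hence "b \<in> L" using d by simp
      thus False using ub(3) \<open>u = 1\<close> unit_1 unfolding idT_def by (simp add: aff_eq)
    qed
    moreover have "(1 - u) * z = b - (u * z + b - z)" by (simp add: algebra_simps)
    moreover have "b - (u * z + b - z) \<in> B"
    proof -
      have "u * z + b - z \<in> B" using d BL by auto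
      from Bd[OF ub(2) this] show ?thesis .
    qed
    ultimately have "u \<noteq> 1 \<and> (1 - u) * z \<in> B" by simp
    thus "\<exists>u\<in>U. u \<noteq> 1 \<and> (1 - u) * z \<in> B" using ub by blast
  next
    assume "\<exists>u\<in>U. u \<noteq> 1 \<and> (1 - u) * z \<in> B"
    then obtain u where u: "u \<in> U" "u \<noteq> 1" "(1 - u) * z \<in> B" by blast
    let ?g = "aff L u ((1 - u) * z)"
    have "?g \<in> \<Gamma>" unfolding G using u by blast
    moreover have "?g \<noteq> idT L" unfolding idT_def using u Uu unit_1 by (simp add: aff_eq)
    moreover have "?g (coset L z) = coset L z" using u Uu by (simp add: aff_coset algebra_simps)
    ultimately show "\<exists>\<gamma>\<in>\<Gamma>. \<gamma> \<noteq> idT L \<and> \<gamma> (coset L z) = coset L z" by blast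
  qed
  define Q where "Q = {z. z \<notin> B \<and> (\<exists>u\<in>U. u \<noteq> 1 \<and> (1 - u) * z \<in> B)}"
  have bp: "branch_points L \<Gamma> = Orb ` Q"
  proof
    show "branch_points L \<Gamma> \<subseteq> Orb ` Q"
    proof
      fix X assume "X \<in> branch_points L \<Gamma>"
      then obtain P where P: "X = orbit \<Gamma> P" "P \<in> punctured L \<Gamma>"
        "\<exists>\<gamma>\<in>\<Gamma>. \<gamma> \<noteq> idT L \<and> \<gamma> P = P" unfolding branch_points_def by blast
      have "P \<in> torus L" using P(2) unfolding punctured_def by blast
      then obtain z where z: "P = coset L z" by (auto elim: torusE)
      have "z \<in> Q" unfolding Q_def using P punc stab z by blast
      thus "X \<in> Orb ` Q" using P(1) z orb by blast
    qed
  next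
    show "Orb ` Q \<subseteq> branch_points L \<Gamma>"
    proof
      fix X assume "X \<in> Orb ` Q"
      then obtain z where z: "z \<in> Q" "X = Orb z" by blast
      have "coset L z \<in> punctured L \<Gamma>" using z punc unfolding Q_def by blast
      moreover have "\<exists>\<gamma>\<in>\<Gamma>. \<gamma> \<noteq> idT L \<and> \<gamma> (coset L z) = coset L z"
        using z stab unfolding Q_def by blast
      moreover have "X = orbit \<Gamma> (coset L z)" using z orb by simp
      ultimately show "X \<in> branch_points L \<Gamma>" unfolding branch_points_def by blast
    qed
  qed
  have "Orb ` Q = Orb ` R"
  proof
    show "Orb ` Q \<subseteq> Orb ` R"
    proof
      fix X assume "X \<in> Orb ` Q"
      then obtain z u where z: "X = Orb z" "z \<notin> B" "u \<in> U" "u \<noteq> 1" "(1 - u) * z \<in> B"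
        unfolding Q_def by blast
      obtain r v where "r \<in> R" "v \<in> U" "z - v * r \<in> B" using cover[OF z(2-5)] by blast
      thus "X \<in> Orb ` R" using eqv z(1) by blast
    qed
  next
    show "Orb ` R \<subseteq> Orb ` Q"
      using inR unfolding Q_def by blast
  qed
  moreover have "inj_on Orb R"
    by (rule inj_onI) (use eqv sep in blast)
  ultimately show ?thesis using bp card_image by simp
qed

end

lemma root_order:
  fixes x :: complex
  assumes xn: "x ^ n = 1" and n: "n > 0"
  obtains m where "m > 0" "x ^ m = 1" "\<And>j. 0 < j \<Longrightarrow> j < m \<Longrightarrow> x ^ j \<noteq> 1"
    "card (range (\<lambda>k. x ^ k)) = m"
proof -
  define m where "m = (LEAST m. 0 < m \<and> x ^ m = 1)"
  have m: "0 < m \<and> x ^ m = 1" unfolding m_def by (rule LeastI[of _ n]) (use xn n in auto)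
  have mj: "x ^ j \<noteq> 1" if "0 < j" "j < m" for j
    using not_less_Least[of j "\<lambda>m. 0 < m \<and> x ^ m = 1"] that unfolding m_def by auto
  have x0: "x \<noteq> 0" using xn n by (metis power_0_left zero_neq_one neq0_conv)
  have red: "x ^ k = x ^ (k mod m)" for k
  proof -
    have "x ^ k = x ^ (m * (k div m) + k mod m)" by (simp only: mult_div_mod_eq)
    also have "\<dots> = (x ^ m) ^ (k div m) * x ^ (k mod m)" by (simp only: power_add power_mult)
    finally show ?thesis using m by simp
  qed
  have rng: "range (\<lambda>k. x ^ k) = (\<lambda>k. x ^ k) ` {..<m}"
  proof
    show "range (\<lambda>k. x ^ k) \<subseteq> (\<lambda>k. x ^ k) ` {..<m}"
    proof
      fix y assume "y \<in> range (\<lambda>k. x ^ k)"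
      then obtain k where "y = x ^ k" by auto
      hence "y = x ^ (k mod m)" using red by simp
      moreover have "k mod m < m" using m by simp
      ultimately show "y \<in> (\<lambda>k. x ^ k) ` {..<m}" by blast
    qed
  qed auto
  have inj: "inj_on (\<lambda>k. x ^ k) {..<m}"
  proof (rule inj_onI)
    fix i j assume i: "i \<in> {..<m}" and j: "j \<in> {..<m}" and eq: "x ^ i = x ^ j"
    show "i = j"
    proof (rule ccontr)
      assume "i \<noteq> j"
      then consider "i < j" | "j < i" by linarith
      thus False
      proof cases
        case 1
        have "x ^ j = x ^ i * x ^ (j - i)" using 1 by (simp add: power_add[symmetric])
        hence "x ^ (j - i) = 1" using eq x0 by simp
        moreover have "j - i < m" using j by auto
        ultimately show False using mj[of "j - i"] 1 by auto
      next
        case 2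
        have "x ^ i = x ^ j * x ^ (i - j)" using 2 by (simp add: power_add[symmetric])
        hence "x ^ (i - j) = 1" using eq x0 by simp
        moreover have "i - j < m" using i by auto
        ultimately show False using mj[of "i - j"] 2 by auto
      qed
    qed
  qed
  have "card (range (\<lambda>k. x ^ k)) = m" unfolding rng using card_image[OF inj] by simp
  thus thesis using that m mj by blast
qed

lemma gen_le: "aut_subgroup L H \<Longrightarrow> S \<subseteq> H \<Longrightarrow> generated L S \<subseteq> H"
  unfolding generated_def by blast
lemma gen_ge: "S \<subseteq> generated L S"
  unfolding generated_def by blast

context lat
begin

lemma pow_rot: "lattice_unit L e \<Longrightarrow> (compT L (aff L e 0) ^^ k) (idT L) = aff L (e ^ k) 0"
  by (induction k) (simp_all add: idT_def compT_aff unit_pow)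

lemma pow_tr: "(compT L (aff L 1 b) ^^ k) (idT L) = aff L 1 (of_nat k * b)"
  by (induction k) (simp_all add: idT_def compT_aff unit_1 algebra_simps)

lemma cyc_self: "g \<in> Aut L \<Longrightarrow> g \<in> cyc L g"
proof -
  assume "g \<in> Aut L"
  then obtain e b where g: "g = aff L e b" "lattice_unit L e" unfolding Aut_def by blast
  have "(compT L g ^^ 1) (idT L) = g" using g unit_1 by (simp add: idT_def compT_aff)
  thus "g \<in> cyc L g" unfolding cyc_def by (metis (mono_tags, lifting) mem_Collect_eq)
qed

lemma Aut_aff: "f \<in> Aut L \<Longrightarrow> \<exists>e b. f = aff L e b \<and> lattice_unit L e"
  unfolding Aut_def by blast

lemma finite_ball: "finite {l \<in> L. cmod l \<le> R}"
proof -
  define D where "D = Re p * Im q - Im p * Re q"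
  define C where "C = (\<bar>Re p\<bar> + \<bar>Im p\<bar> + \<bar>Re q\<bar> + \<bar>Im q\<bar>) / \<bar>D\<bar>"
  define N where "N = ceiling (R * C)"
  have Dn: "D \<noteq> 0" using D unfolding D_def .
  have bx: "\<bar>cx z\<bar> \<le> cmod z * C" for z
  proof -
    have "\<bar>Re z * Im q - Im z * Re q\<bar> \<le> \<bar>Re z\<bar> * \<bar>Im q\<bar> + \<bar>Im z\<bar> * \<bar>Re q\<bar>"
      by (metis abs_mult abs_triangle_ineq4)
    also have "\<dots> \<le> cmod z * \<bar>Im q\<bar> + cmod z * \<bar>Re q\<bar>"
      by (intro add_mono mult_right_mono abs_Re_le_cmod abs_Im_le_cmod) auto
    also have "\<dots> \<le> cmod z * (\<bar>Re p\<bar> + \<bar>Im p\<bar> + \<bar>Re q\<bar> + \<bar>Im q\<bar>)"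
      by (simp add: algebra_simps)
    finally show ?thesis unfolding cx_def C_def D_def[symmetric] using Dn
      by (simp add: abs_div pos_divide_le_eq)
  qed
  have by': "\<bar>cy z\<bar> \<le> cmod z * C" for z
  proof -
    have "\<bar>Re p * Im z - Im p * Re z\<bar> \<le> \<bar>Re p\<bar> * \<bar>Im z\<bar> + \<bar>Im p\<bar> * \<bar>Re z\<bar>"
      by (metis abs_mult abs_triangle_ineq4)
    also have "\<dots> \<le> \<bar>Re p\<bar> * cmod z + \<bar>Im p\<bar> * cmod z"
      by (intro add_mono mult_left_mono abs_Re_le_cmod abs_Im_le_cmod) auto
    also have "\<dots> \<le> cmod z * (\<bar>Re p\<bar> + \<bar>Im p\<bar> + \<bar>Re q\<bar> + \<bar>Im q\<bar>)"
      by (simp add: algebra_simps)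
    finally show ?thesis unfolding cy_def C_def D_def[symmetric] using Dn
      by (simp add: abs_div pos_divide_le_eq)
  qed
  have C0: "C \<ge> 0" unfolding C_def by simp
  have "{l \<in> L. cmod l \<le> R} \<subseteq> (\<lambda>(m, n). of_int m * p + of_int n * q) ` ({-N..N} \<times> {-N..N})"
  proof
    fix l assume l: "l \<in> {l \<in> L. cmod l \<le> R}"
    then obtain m n :: int where mn: "l = of_int m * p + of_int n * q" unfolding lattice_def by auto
    have "l = of_real (of_int m) * p + of_real (of_int n) * q" using mn by simp
    hence "cx l = of_int m \<and> cy l = of_int n" using uniq decomp[of l] by metis
    moreover have "cmod l * C \<le> R * C" using l C0 by (simp add: mult_right_mono)
    ultimately have "\<bar>of_int m\<bar> \<le> R * C" "\<bar>of_int n :: real\<bar> \<le> R * C"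
      using bx[of l] by'[of l] by auto
    hence "\<bar>m\<bar> \<le> N" "\<bar>n\<bar> \<le> N" unfolding N_def by linarith+
    hence "(m, n) \<in> {-N..N} \<times> {-N..N}" by auto
    thus "l \<in> (\<lambda>(m, n). of_int m * p + of_int n * q) ` ({-N..N} \<times> {-N..N})"
      using mn by force
  qed
  thus ?thesis by (rule finite_subset) auto
qed

lemma p_nz: "p \<noteq> 0" using D by auto

lemma min_vec: "\<exists>a\<in>L. a \<noteq> 0 \<and> (\<forall>l\<in>L. l \<noteq> 0 \<longrightarrow> cmod a \<le> cmod l)"
proof -
  define S where "S = {l \<in> L. cmod l \<le> cmod p} - {0}"
  have fS: "finite S" unfolding S_def using finite_ball by auto
  have pS: "p \<in> S" unfolding S_def using Lp p_nz by auto
  define m where "m = Min (cmod ` S)"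
  have "m \<in> cmod ` S" unfolding m_def using fS pS by (intro Min_in) auto
  then obtain a where a: "a \<in> S" "cmod a = m" by auto
  have "cmod a \<le> cmod l" if "l \<in> L" "l \<noteq> 0" for l
  proof (cases "cmod l \<le> cmod p")
    case True
    hence "l \<in> S" unfolding S_def using that by auto
    thus ?thesis using a fS unfolding m_def by simp
  next
    case False
    have "cmod a \<le> cmod p" using a pS fS unfolding m_def by simp
    thus ?thesis using False by simp
  qed
  thus ?thesis using a unfolding S_def by auto
qed

lemma euclid:
  assumes u: "lattice_unit L e" and ei: "Im e \<noteq> 0" and e1: "cmod e = 1" and er: "\<bar>Re e\<bar> \<le> 1/2"
  shows "\<exists>a. a \<noteq> 0 \<and> lattice a (a * e) = L"
proof -
  obtain a where a: "a \<in> L" "a \<noteq> 0" "\<And>l. l \<in> L \<Longrightarrow> l \<noteq> 0 \<Longrightarrow> cmod a \<le> cmod l"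
    using min_vec by blast
  have ae: "a * e \<in> L" using unit_mem[OF u a(1)] by (simp add: mult.commute)
  have "lattice a (a * e) = L"
  proof
    show "lattice a (a * e) \<subseteq> L"
    proof
      fix z assume "z \<in> lattice a (a * e)"
      then obtain m n :: int where "z = of_int m * a + of_int n * (a * e)" unfolding lattice_def by auto
      thus "z \<in> L" using Lint a(1) ae Ladd by auto
    qed
    show "L \<subseteq> lattice a (a * e)"
    proof
      fix l assume l: "l \<in> L"
      define w where "w = l / a"
      define y where "y = Im w / Im e"
      define x where "x = Re w - y * Re e"
      have wxy: "w = of_real x + of_real y * e"
        unfolding x_def y_def using ei by (intro complex_eqI) (auto simp: field_simps)
      define m where "m = round x"
      define n where "n = round y"
      define s where "s = x - of_int m"
      define t where "t = y - of_int n"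
      have s: "\<bar>s\<bar> \<le> 1/2" unfolding s_def m_def using of_int_round_abs_le[of x] by (simp add: abs_minus_commute)
      have t: "\<bar>t\<bar> \<le> 1/2" unfolding t_def n_def using of_int_round_abs_le[of y] by (simp add: abs_minus_commute)
      have ee: "(Re e)^2 + (Im e)^2 = 1" using e1 unfolding cmod_def
        by (metis real_sqrt_eq_1_iff)
      have nrm: "(cmod (of_real s + of_real t * e))^2 = s^2 + t^2 + 2 * s * t * Re e"
      proof -
        have "(cmod (of_real s + of_real t * e))^2 = (s + t * Re e)^2 + (t * Im e)^2"
          unfolding cmod_def by simp
        also have "\<dots> = s^2 + t^2 * ((Re e)^2 + (Im e)^2) + 2 * s * t * Re e"
          by (simp add: power2_eq_square algebra_simps)
        finally show ?thesis using ee by simp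
      qed
      have "\<bar>2 * s * t * Re e\<bar> \<le> 2 * (1/2) * (1/2) * (1/2)"
      proof -
        have "\<bar>2 * s * t * Re e\<bar> = 2 * \<bar>s\<bar> * \<bar>t\<bar> * \<bar>Re e\<bar>" by (simp add: abs_mult)
        also have "\<dots> \<le> 2 * (1/2) * (1/2) * (1/2)"
          using s t er by (intro mult_mono) auto
        finally show ?thesis .
      qed
      moreover have "s^2 \<le> 1/4"
      proof -
        have "\<bar>s\<bar>^2 \<le> (1/2)^2" by (rule power_mono) (use s in auto)
        thus ?thesis by (simp add: power2_eq_square)
      qed
      moreover have "t^2 \<le> 1/4"
      proof -
        have "\<bar>t\<bar>^2 \<le> (1/2)^2" by (rule power_mono) (use t in auto)
        thus ?thesis by (simp add: power2_eq_square)
      qed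
      ultimately have "(cmod (of_real s + of_real t * e))^2 < 1" using nrm by linarith
      hence lt1: "cmod (of_real s + of_real t * e) < 1"
        using abs_square_less_1[of "cmod (of_real s + of_real t * e)"] by simp
      define r where "r = l - (of_int m * a + of_int n * (a * e))"
      have r_eq: "r = (of_real s + of_real t * e) * a"
      proof -
        have "l = w * a" unfolding w_def using a(2) by simp
        thus ?thesis unfolding r_def wxy s_def t_def by (simp add: algebra_simps)
      qed
      have rL: "r \<in> L" unfolding r_def using l Lint a(1) ae Ladd Ldiff by auto
      have "cmod r < cmod a"
        using lt1 a(2) unfolding r_eq norm_mult by simp
      hence "r = 0" using a(3)[OF rL] by force
      hence "l = of_int m * a + of_int n * (a * e)" unfolding r_def by simp
      thus "l \<in> lattice a (a * e)" unfolding lattice_def by blast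
    qed
  qed
  thus ?thesis using a(2) by blast
qed

end

context lat
begin

lemma hnf:
  assumes BL: "L \<subseteq> B" and Ba: "\<forall>x\<in>B. \<forall>y\<in>B. x + y \<in> B" and Bn: "\<forall>x\<in>B. - x \<in> B"
    and d: "d > (0::nat)" and Bd: "\<forall>x\<in>B. of_nat d * x \<in> L"
  shows "\<exists>b1 b2. Re b1 * Im b2 - Im b1 * Re b2 \<noteq> 0 \<and> lattice b1 b2 = B"
proof -
  have Bnat: "of_nat k * x \<in> B" if "x \<in> B" for k x
  proof (induction k)
    case 0 thus ?case using BL L0 by auto
  next
    case (Suc k)
    have "of_nat (Suc k) * x = of_nat k * x + x" by (simp add: algebra_simps)
    thus ?case using Suc that Ba by simp
  qed
  have Bint: "of_int k * x \<in> B" if "x \<in> B" for k x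
  proof (cases "k \<ge> 0")
    case True
    hence eq: "of_int k * x = of_nat (nat k) * x" by simp
    show ?thesis unfolding eq by (rule Bnat[OF that])
  next
    case False
    hence eq: "of_int k * x = - (of_nat (nat (- k)) * x)" by simp
    show ?thesis unfolding eq using Bnat[OF that] Bn by blast
  qed
  define dd :: complex where "dd = of_nat d"
  have dd0: "dd \<noteq> 0" unfolding dd_def using d by simp
  define v where "v m n = (of_int m * p + of_int n * q) / dd" for m n :: int
  define S where "S = {(m, n). v m n \<in> B}"
  have Sd1: "(int d, 0) \<in> S" unfolding S_def v_def dd_def using BL Lp d by auto
  have Sd2: "(0, int d) \<in> S" unfolding S_def v_def dd_def using BL Lq d by auto
  have Scl: "(m - k * m', n - k * n') \<in> S" if "(m, n) \<in> S" "(m', n') \<in> S" for m n m' n' k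
  proof -
    have "v (m - k * m') (n - k * n') = v m n + - (of_int k * v m' n')"
      unfolding v_def by (simp add: algebra_simps add_divide_distrib diff_divide_distrib)
    moreover have "v m n \<in> B" "v m' n' \<in> B" using that unfolding S_def by auto
    moreover have "- (of_int k * v m' n') \<in> B" using Bint[of "v m' n'" k] \<open>v m' n' \<in> B\<close> Bn by blast
    ultimately have "v (m - k * m') (n - k * n') \<in> B" using Ba by metis
    thus ?thesis unfolding S_def by simp
  qed
  have Sall: "\<exists>m n. (m, n) \<in> S \<and> x = v m n" if "x \<in> B" for x
  proof -
    have "dd * x \<in> L" using Bd that unfolding dd_def by auto
    then obtain m n :: int where "dd * x = of_int m * p + of_int n * q" unfolding lattice_def by auto
    hence "x = v m n" unfolding v_def using dd0 by (simp add: field_simps)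
    thus ?thesis unfolding S_def using that by auto
  qed
  define a0 where "a0 = (LEAST k::nat. k > 0 \<and> (\<exists>e. (int k, e) \<in> S))"
  have a0: "a0 > 0 \<and> (\<exists>e. (int a0, e) \<in> S)"
    unfolding a0_def by (rule LeastI[of _ d]) (use d Sd1 in auto)
  then obtain e0 where e0: "(int a0, e0) \<in> S" by blast
  have a0min: "\<not> (k > 0 \<and> (\<exists>e. (int k, e) \<in> S))" if "k < a0" for k
    using not_less_Least[of k] that unfolding a0_def by blast
  define f0 where "f0 = (LEAST k::nat. k > 0 \<and> (0, int k) \<in> S)"
  have f0: "f0 > 0 \<and> (0, int f0) \<in> S"
    unfolding f0_def by (rule LeastI[of _ d]) (use d Sd2 in auto)
  have f0min: "\<not> (k > 0 \<and> (0, int k) \<in> S)" if "k < f0" for k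
    using not_less_Least[of k] that unfolding f0_def by blast
  have adv: "int a0 dvd m" if "(m, n) \<in> S" for m n
  proof -
    define k where "k = m div int a0"
    define r where "r = m mod int a0"
    have "(m - k * int a0, n - k * e0) \<in> S" using Scl[OF that e0] .
    moreover have "m - k * int a0 = r" unfolding k_def r_def by (simp add: algebra_simps)
    ultimately have rS: "(r, n - k * e0) \<in> S" by simp
    have r0: "r \<ge> 0" "r < int a0" unfolding r_def using a0 by auto
    have "r = 0"
    proof (rule ccontr)
      assume "r \<noteq> 0"
      hence "nat r > 0" "nat r < a0" using r0 by auto
      moreover have "(int (nat r), n - k * e0) \<in> S" using rS r0 by simp
      ultimately show False using a0min by blast
    qed
    thus ?thesis unfolding r_def by auto
  qed
  have fdv: "int f0 dvd n" if "(0, n) \<in> S" for n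
  proof -
    define k where "k = n div int f0"
    define r where "r = n mod int f0"
    have "(0 - k * 0, n - k * int f0) \<in> S" using Scl[OF that] f0 by blast
    moreover have "n - k * int f0 = r" unfolding k_def r_def by (simp add: algebra_simps)
    ultimately have rS: "(0, r) \<in> S" by simp
    have r0: "r \<ge> 0" "r < int f0" unfolding r_def using f0 by auto
    have "r = 0"
    proof (rule ccontr)
      assume "r \<noteq> 0"
      hence "nat r > 0" "nat r < f0" using r0 by auto
      moreover have "(0, int (nat r)) \<in> S" using rS r0 by simp
      ultimately show False using f0min by blast
    qed
    thus ?thesis unfolding r_def by auto
  qed
  define b1 where "b1 = v (int a0) e0"
  define b2 where "b2 = v 0 (int f0)"
  have b1B: "b1 \<in> B" using e0 unfolding b1_def S_def by auto
  have b2B: "b2 \<in> B" using f0 unfolding b2_def S_def by auto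
  have "lattice b1 b2 = B"
  proof
    show "lattice b1 b2 \<subseteq> B"
    proof
      fix x assume "x \<in> lattice b1 b2"
      then obtain i j :: int where "x = of_int i * b1 + of_int j * b2" unfolding lattice_def by auto
      thus "x \<in> B" using Bint b1B b2B Ba by auto
    qed
    show "B \<subseteq> lattice b1 b2"
    proof
      fix x assume "x \<in> B"
      then obtain m n where mn: "(m, n) \<in> S" "x = v m n" using Sall by blast
      obtain j where j: "m = int a0 * j" using adv[OF mn(1)] by (auto elim: dvdE)
      have "(m - j * int a0, n - j * e0) \<in> S" using Scl[OF mn(1) e0] .
      hence "(0, n - j * e0) \<in> S" using j by (simp add: algebra_simps)
      then obtain i where i: "n - j * e0 = int f0 * i" using fdv by (auto elim: dvdE)
      have "x = of_int j * b1 + of_int i * b2"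
      proof -
        have "n = j * e0 + int f0 * i" using i by simp
        thus ?thesis unfolding mn(2) b1_def b2_def v_def j
          by (simp add: algebra_simps add_divide_distrib)
      qed
      thus "x \<in> lattice b1 b2" unfolding lattice_def by blast
    qed
  qed
  moreover have "Re b1 * Im b2 - Im b1 * Re b2 \<noteq> 0"
  proof -
    have "Re b1 * Im b2 - Im b1 * Re b2 = (real a0 * real f0 / (real d)^2) * (Re p * Im q - Im p * Re q)"
      unfolding b1_def b2_def v_def dd_def
      by (simp add: power2_eq_square algebra_simps add_divide_distrib diff_divide_distrib)
    moreover have "real a0 * real f0 / (real d)^2 \<noteq> 0" using a0 f0 d by simp
    ultimately show ?thesis using D by simp
  qed
  ultimately show ?thesis by blast
qed

end

lemma half_cases: "2 * (x::real) \<in> \<int> \<Longrightarrow> x \<in> \<int> \<or> x - 1/2 \<in> \<int>"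
proof -
  assume "2 * x \<in> \<int>"
  then obtain k where k: "2 * x = of_int k" by (auto elim: Ints_cases)
  have "k = 2 * (k div 2) + k mod 2" by simp
  moreover have "k mod 2 = 0 \<or> k mod 2 = 1" by auto
  ultimately consider "k = 2 * (k div 2)" | "k = 2 * (k div 2) + 1" by fastforce
  thus ?thesis
  proof cases
    case 1
    hence "x = of_int (k div 2)" using k by (metis of_int_mult of_int_numeral mult_cancel_left zero_neq_numeral)
    thus ?thesis by simp
  next
    case 2
    hence "of_int k = 2 * (of_int (k div 2) :: real) + 1" by (metis of_int_add of_int_mult of_int_numeral of_int_1)
    hence "x - 1/2 = of_int (k div 2)" using k by linarith
    thus ?thesis by (metis Ints_of_int)
  qed
qed

lemma third_cases:
  fixes x y :: real
  assumes "x + y \<in> \<int>" "3 * x \<in> \<int>"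
  shows "(x \<in> \<int> \<and> y \<in> \<int>) \<or> (x - 1/3 \<in> \<int> \<and> y - 2/3 \<in> \<int>) \<or> (x - 2/3 \<in> \<int> \<and> y - 1/3 \<in> \<int>)"
proof -
  obtain k where k: "3 * x = of_int k" using assms(2) by (auto elim: Ints_cases)
  obtain m where m: "x + y = of_int m" using assms(1) by (auto elim: Ints_cases)
  define q where "q = k div 3"
  have kq: "k = 3 * q + k mod 3" unfolding q_def by simp
  have "k mod 3 = 0 \<or> k mod 3 = 1 \<or> k mod 3 = 2" by auto
  then consider "k = 3 * q" | "k = 3 * q + 1" | "k = 3 * q + 2" using kq by fastforce
  thus ?thesis
  proof cases
    case 1
    hence "of_int k = 3 * (of_int q :: real)" by simp
    hence "x = of_int q" "y = of_int (m - q)" using k m by linarith+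
    thus ?thesis by (metis Ints_of_int)
  next
    case 2
    hence "of_int k = 3 * (of_int q :: real) + 1" by simp
    hence "x - 1/3 = of_int q" "y - 2/3 = of_int (m - q - 1)" using k m by linarith+
    thus ?thesis by (metis Ints_of_int)
  next
    case 3
    hence "of_int k = 3 * (of_int q :: real) + 2" by simp
    hence "x - 2/3 = of_int q" "y - 1/3 = of_int (m - q - 1)" using k m by linarith+
    thus ?thesis by (metis Ints_of_int)
  qed
qed

lemma range_pow:
  fixes x :: complex
  assumes "x ^ n = 1" "n > 0"
  shows "range (\<lambda>k. x ^ k) = (\<lambda>k. x ^ k) ` {..<n}"
proof
  show "range (\<lambda>k. x ^ k) \<subseteq> (\<lambda>k. x ^ k) ` {..<n}"
  proof
    fix y assume "y \<in> range (\<lambda>k. x ^ k)"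
    then obtain k where k: "y = x ^ k" by auto
    have "x ^ k = x ^ (n * (k div n) + k mod n)" by (simp only: mult_div_mod_eq)
    also have "\<dots> = (x ^ n) ^ (k div n) * x ^ (k mod n)" by (simp only: power_add power_mult)
    finally have "y = x ^ (k mod n)" using assms k by simp
    moreover have "k mod n < n" using assms by simp
    ultimately show "y \<in> (\<lambda>k. x ^ k) ` {..<n}" by blast
  qed
qed auto

context lat
begin

lemma memr: "d > 0 \<Longrightarrow> of_real x * p + of_real y * q - pt d m n \<in> L \<longleftrightarrow>
    x - of_int m / of_int d \<in> \<int> \<and> y - of_int n / of_int d \<in> \<int>"
proof -
  assume d: "d > 0"
  have "of_real x * p + of_real y * q - pt d m n =
        of_real (x - of_int m / of_int d) * p + of_real (y - of_int n / of_int d) * q"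
    using d by (simp add: pt_real algebra_simps)
  thus ?thesis by (simp only: mem)
qed

lemma pow_group:
  assumes u: "lattice_unit L e" and en: "e ^ n = 1" and n: "n > 0"
  shows "\<forall>u\<in>range (\<lambda>k. e ^ k). lattice_unit L u" "1 \<in> range (\<lambda>k. e ^ k)"
    "\<forall>u\<in>range (\<lambda>k. e ^ k). \<forall>v\<in>range (\<lambda>k. e ^ k). u * v \<in> range (\<lambda>k. e ^ k)"
    "\<forall>u\<in>range (\<lambda>k. e ^ k). inverse u \<in> range (\<lambda>k. e ^ k)"
proof -
  show "\<forall>u\<in>range (\<lambda>k. e ^ k). lattice_unit L u" using unit_pow[OF u] by auto
  show "1 \<in> range (\<lambda>k. e ^ k)" by (metis power_0 rangeI)
  show "\<forall>u\<in>range (\<lambda>k. e ^ k). \<forall>v\<in>range (\<lambda>k. e ^ k). u * v \<in> range (\<lambda>k. e ^ k)"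
    by (auto simp: power_add[symmetric])
  have e0: "e \<noteq> 0" using unit_nz[OF u] .
  have "inverse (e ^ k) = e ^ (k * (n - 1))" for k
  proof -
    have "e ^ k * e ^ (k * (n - 1)) = e ^ (k * n)"
    proof -
      have "k + k * (n - 1) = k * n" using n by (cases n) auto
      thus ?thesis by (simp add: power_add[symmetric])
    qed
    also have "\<dots> = (e ^ n) ^ k" by (simp add: power_mult[symmetric] mult.commute)
    also have "\<dots> = 1" using en by simp
    finally show ?thesis using e0 by (metis inverse_unique)
  qed
  thus "\<forall>u\<in>range (\<lambda>k. e ^ k). inverse u \<in> range (\<lambda>k. e ^ k)" by auto
qed

end

locale elat =
  fixes a e :: complex and s :: int
  assumes a0: "a \<noteq> 0" and eqn: "e ^ 2 = of_int s * e - 1" and s: "s \<in> {-1, 0, 1}"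
begin

lemma e_facts: "Re e = of_int s / 2" "Im e \<noteq> 0" "cmod e = 1" "\<bar>Re e\<bar> \<le> 1/2"
proof -
  define x where "x = Re e"
  define y where "y = Im e"
  have re: "x^2 - y^2 = of_int s * x - 1"
    using arg_cong[OF eqn, of Re] unfolding x_def y_def by (simp add: power2_eq_square)
  have im: "2 * x * y = of_int s * y"
    using arg_cong[OF eqn, of Im] unfolding x_def y_def by (simp add: power2_eq_square)
  have ss: "(of_int s :: real)^2 \<le> 1" using s by auto
  have "y \<noteq> 0"
  proof
    assume "y = 0"
    hence "(x - of_int s / 2)^2 + (1 - (of_int s)^2 / 4) = 0" using re
      by (simp add: power2_eq_square algebra_simps)
    moreover have "(x - of_int s / 2)^2 \<ge> 0" by simp
    ultimately show False using ss by linarith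
  qed
  thus "Im e \<noteq> 0" unfolding y_def .
  hence xs: "x = of_int s / 2" using im \<open>y \<noteq> 0\<close> by (simp add: field_simps)
  thus "Re e = of_int s / 2" unfolding x_def .
  have "x^2 + y^2 = 2 * x * x - of_int s * x + 1" using re by (simp add: power2_eq_square algebra_simps)
  also have "\<dots> = 1" unfolding xs by (simp add: algebra_simps)
  finally have "x^2 + y^2 = 1" .
  thus "cmod e = 1" unfolding cmod_def x_def y_def by simp
  show "\<bar>Re e\<bar> \<le> 1/2" using xs s unfolding x_def by auto
qed

lemma D_ae: "Re a * Im (a * e) - Im a * Re (a * e) \<noteq> 0"
proof -
  have "Re a * Im (a * e) - Im a * Re (a * e) = ((Re a)^2 + (Im a)^2) * Im e"
    by (simp add: power2_eq_square algebra_simps)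
  moreover have "(Re a)^2 + (Im a)^2 \<noteq> 0" using a0
    by (metis complex_eq_0 zero_complex.code)
  ultimately show ?thesis using e_facts(2) by simp
qed

sublocale lat a "a * e" using D_ae by unfold_locales

definition lin :: "int \<Rightarrow> int \<Rightarrow> complex" where
  "lin c0 c1 = of_int c0 + of_int c1 * e"

lemma lin_pt: "lin c0 c1 * pt d x y = pt d (c0 * x - c1 * y) (c0 * y + c1 * x + s * c1 * y)"
proof -
  have "lin c0 c1 * (of_int x * a + of_int y * (a * e)) =
    of_int (c0 * x - c1 * y) * a + of_int (c0 * y + c1 * x + s * c1 * y) * (a * e)"
  proof -
    have "lin c0 c1 * (of_int x * a + of_int y * (a * e)) =
      of_int c0 * of_int x * a + (of_int c0 * of_int y + of_int c1 * of_int x) * a * e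
      + of_int c1 * of_int y * a * e^2"
      unfolding lin_def by (simp add: power2_eq_square algebra_simps)
    also have "\<dots> = of_int (c0 * x - c1 * y) * a + of_int (c0 * y + c1 * x + s * c1 * y) * (a * e)"
      unfolding eqn by (simp add: algebra_simps)
    finally show ?thesis .
  qed
  thus ?thesis unfolding pt_def by simp
qed

lemma lin_real: "lin c0 c1 * (of_real x * a + of_real y * (a * e)) =
    of_real (of_int c0 * x - of_int c1 * y) * a + of_real (of_int c0 * y + of_int c1 * x + of_int s * of_int c1 * y) * (a * e)"
proof -
  have "lin c0 c1 * (of_real x * a + of_real y * (a * e)) =
      of_int c0 * of_real x * a + (of_int c0 * of_real y + of_int c1 * of_real x) * a * e
      + of_int c1 * of_real y * a * e^2"
    unfolding lin_def by (simp add: power2_eq_square algebra_simps)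
  also have "\<dots> = of_real (of_int c0 * x - of_int c1 * y) * a + of_real (of_int c0 * y + of_int c1 * x + of_int s * of_int c1 * y) * (a * e)"
    unfolding eqn by (simp add: algebra_simps)
  finally show ?thesis .
qed

lemma lin_eq: "lin c0 c1 = lin d0 d1 \<longleftrightarrow> c0 = d0 \<and> c1 = d1"
proof
  assume h: "lin c0 c1 = lin d0 d1"
  have "of_int c1 * Im e = of_int d1 * Im e" using arg_cong[OF h, of Im] unfolding lin_def by simp
  hence 1: "c1 = d1" using e_facts(2) by simp
  have "of_int c0 + of_int c1 * Re e = of_int d0 + of_int d1 * Re e"
    using arg_cong[OF h, of Re] unfolding lin_def by simp
  hence "c0 = d0" using 1 by simp
  thus "c0 = d0 \<and> c1 = d1" using 1 by simp
qed simp

lemma lin_1: "lin 1 0 = 1" unfolding lin_def by simp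
lemma lin_e: "lin 0 1 = e" unfolding lin_def by simp
lemma lin_m1: "lin (-1) 0 = -1" unfolding lin_def by simp
lemma lin_me: "lin 0 (-1) = -e" unfolding lin_def by simp
lemma lin_e2: "lin (-1) s = e ^ 2" unfolding lin_def eqn by simp
lemma lin_me2: "lin 1 (-s) = - (e ^ 2)" unfolding lin_def eqn by simp
lemma one_minus_lin: "1 - lin c0 c1 = lin (1 - c0) (- c1)" unfolding lin_def by simp

end

context elat
begin

lemma coords: obtains x y where "w = of_real x * a + of_real y * (a * e)"
  using decomp[of w] by blast

lemma lin_mem: "lin c0 c1 * (of_real x * a + of_real y * (a * e)) \<in> L \<longleftrightarrow>
   of_int c0 * x - of_int c1 * y \<in> \<int> \<and> of_int c0 * y + of_int c1 * x + of_int s * of_int c1 * y \<in> \<int>"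
  unfolding lin_real by (rule mem)

lemma Ints_obtain: "(r::real) \<in> \<int> \<Longrightarrow> (\<And>k. r = of_int k \<Longrightarrow> thesis) \<Longrightarrow> thesis"
  by (auto elim: Ints_cases)

lemma cover3:
  assumes s1: "s = -1" and w: "w \<notin> L" and u: "u \<in> {lin 1 0, lin 0 1, lin (-1) (-1)}" "u \<noteq> 1"
    and wu: "(1 - u) * w \<in> L"
  shows "w - pt 3 2 1 \<in> L \<or> w - pt 3 1 2 \<in> L"
proof -
  obtain x y where wxy: "w = of_real x * a + of_real y * (a * e)" by (rule coords)
  have c: "x + y \<in> \<int> \<and> 3 * x \<in> \<int>"
  proof -
    from u consider "u = lin 0 1" | "u = lin (-1) (-1)" using lin_1 by auto
    then show ?thesis
    proof cases
      case 1
      have "of_int 1 * x - of_int (-1) * y \<in> \<int> \<and> of_int 1 * y + of_int (-1) * x + of_int s * of_int (-1) * y \<in> \<int>"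
        using wu unfolding 1 one_minus_lin wxy lin_mem by simp
      hence h: "x + y \<in> \<int>" "y + y - x \<in> \<int>" using s1 by (simp_all add: algebra_simps)
      obtain k1 where k1: "x + y = of_int k1" using h(1) by (rule Ints_obtain)
      obtain k2 where k2: "y + y - x = of_int k2" using h(2) by (rule Ints_obtain)
      have "3 * x = of_int (2 * k1 - k2)" using k1 k2 by simp
      thus ?thesis using h(1) by (metis Ints_of_int)
    next
      case 2
      have "of_int 2 * x - of_int 1 * y \<in> \<int> \<and> of_int 2 * y + of_int 1 * x + of_int s * of_int 1 * y \<in> \<int>"
        using wu unfolding 2 one_minus_lin wxy lin_mem by simp
      hence h: "2 * x - y \<in> \<int>" "y + x \<in> \<int>" using s1 by (simp_all add: algebra_simps)
      obtain k1 where k1: "2 * x - y = of_int k1" using h(1) by (rule Ints_obtain)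
      obtain k2 where k2: "y + x = of_int k2" using h(2) by (rule Ints_obtain)
      have "3 * x = of_int (k1 + k2)" using k1 k2 by simp
      moreover have "x + y \<in> \<int>" using h(2) by (simp add: add.commute)
      ultimately show ?thesis by (metis Ints_of_int)
    qed
  qed
  from third_cases[OF c[THEN conjunct1] c[THEN conjunct2]] show ?thesis
  proof (elim disjE conjE)
    assume "x \<in> \<int>" "y \<in> \<int>"
    hence "w \<in> L" unfolding wxy using mem by simp
    thus ?thesis using w by simp
  next
    assume "x - 1/3 \<in> \<int>" "y - 2/3 \<in> \<int>"
    thus ?thesis unfolding wxy using memr[of 3 x y 1 2] by simp
  next
    assume "x - 2/3 \<in> \<int>" "y - 1/3 \<in> \<int>"
    thus ?thesis unfolding wxy using memr[of 3 x y 2 1] by simp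
  qed
qed


lemma sep3:
  assumes s1: "s = -1" and "r \<in> {pt 3 2 1, pt 3 1 2}" "r' \<in> {pt 3 2 1, pt 3 1 2}"
    and "u \<in> {lin 1 0, lin 0 1, lin (-1) (-1)}" and "r - u * r' \<in> L"
  shows "r = r'"
  using assms by (auto simp: lin_pt pt_diff pt_mem)

lemma inR3:
  assumes s1: "s = -1" and "r \<in> {pt 3 2 1, pt 3 1 2}"
  shows "r \<notin> L" "(1 - lin 0 1) * r \<in> L"
  using assms by (auto simp: one_minus_lin lin_pt pt_mem)

lemma B_L:
  assumes u: "\<forall>u\<in>U. lattice_unit L u"
  shows "L \<subseteq> L" "\<forall>x\<in>L. \<forall>y\<in>L. x + y \<in> L" "\<forall>x\<in>L. - x \<in> L" "\<forall>u\<in>U. \<forall>x\<in>L. u * x \<in> L"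
  using Ladd Lneg unit_mem u by auto

lemma range3:
  assumes s1: "s = -1"
  shows "e ^ 3 = 1" "range (\<lambda>k. e ^ k) = {lin 1 0, lin 0 1, lin (-1) (-1)}"
proof -
  have e2: "e ^ 2 = - e - 1" using eqn s1 by simp
  have "e ^ 3 = e * e ^ 2" by (simp add: power2_eq_square power3_eq_cube)
  also have "\<dots> = e * (- e - 1)" unfolding e2 ..
  also have "\<dots> = - (e ^ 2) - e" by (simp add: power2_eq_square algebra_simps)
  also have "\<dots> = 1" unfolding e2 by simp
  finally show e3: "e ^ 3 = 1" .
  have "range (\<lambda>k. e ^ k) = (\<lambda>k. e ^ k) ` {..<3}" using range_pow[OF e3] by simp
  also have "{..<3::nat} = {0, 1, 2}" by auto
  finally show "range (\<lambda>k. e ^ k) = {lin 1 0, lin 0 1, lin (-1) (-1)}"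
    using lin_1 lin_e lin_e2 s1 by auto
qed

lemma case3:
  assumes s1: "s = -1" and u: "lattice_unit L e"
    and G: "\<Gamma> = {aff L u b |u b. u \<in> range (\<lambda>k. e ^ k) \<and> b \<in> L}"
  shows "card (branch_points L \<Gamma>) = 2"
proof -
  note R = range3[OF s1]
  note pg = pow_group[OF u R(1) zero_less_numeral]
  have "card (branch_points L \<Gamma>) = card {pt 3 2 1, pt 3 1 2}"
  proof (rule count_bp[OF pg(1) pg(2) pg(3) pg(4) B_L[OF pg(1)] G])
    fix z u assume "z \<notin> L" "u \<in> range (\<lambda>k. e ^ k)" "u \<noteq> 1" "(1 - u) * z \<in> L"
    hence "z - pt 3 2 1 \<in> L \<or> z - pt 3 1 2 \<in> L" using cover3[OF s1] R(2) by auto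
    moreover have "1 \<in> range (\<lambda>k. e ^ k)" using pg(2) .
    ultimately show "\<exists>r\<in>{pt 3 2 1, pt 3 1 2}. \<exists>v\<in>range (\<lambda>k. e ^ k). z - v * r \<in> L"
      by (metis insertCI mult_1)
  next
    fix r assume r: "r \<in> {pt 3 2 1, pt 3 1 2}"
    have "lin 0 1 \<noteq> lin 1 0" by (simp add: lin_eq)
    hence "lin 0 1 \<noteq> 1" using lin_1 by simp
    moreover have "lin 0 1 \<in> range (\<lambda>k. e ^ k)" using R(2) by simp
    ultimately have "lin 0 1 \<in> range (\<lambda>k. e ^ k)" "lin 0 1 \<noteq> 1" by auto
    thus "r \<notin> L \<and> (\<exists>u\<in>range (\<lambda>k. e ^ k). u \<noteq> 1 \<and> (1 - u) * r \<in> L)"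
      using inR3[OF s1 r] by blast
  next
    fix r r' u assume "r \<in> {pt 3 2 1, pt 3 1 2}" "r' \<in> {pt 3 2 1, pt 3 1 2}"
      "u \<in> range (\<lambda>k. e ^ k)" "r - u * r' \<in> L"
    thus "r = r'" using sep3[OF s1] R(2) by blast
  qed
  moreover have "pt 3 2 1 \<noteq> pt 3 1 2"
  proof
    assume "pt 3 2 1 = pt 3 1 2"
    hence "pt 3 2 1 - pt 3 1 2 \<in> L" using L0 by simp
    thus False by (simp add: pt_diff pt_mem)
  qed
  ultimately show ?thesis by simp
qed

end

lemma third_b:
  fixes x y :: real
  assumes "y - x \<in> \<int>" "3 * x \<in> \<int>"
  shows "(x \<in> \<int> \<and> y \<in> \<int>) \<or> (x - 1/3 \<in> \<int> \<and> y - 1/3 \<in> \<int>) \<or> (x - 2/3 \<in> \<int> \<and> y - 2/3 \<in> \<int>)"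
proof -
  obtain k where k: "3 * x = of_int k" using assms(2) by (auto elim: Ints_cases)
  obtain m where m: "y - x = of_int m" using assms(1) by (auto elim: Ints_cases)
  define q where "q = k div 3"
  have kq: "k = 3 * q + k mod 3" unfolding q_def by simp
  have "k mod 3 = 0 \<or> k mod 3 = 1 \<or> k mod 3 = 2" by auto
  then consider "k = 3 * q" | "k = 3 * q + 1" | "k = 3 * q + 2" using kq by fastforce
  thus ?thesis
  proof cases
    case 1
    hence "of_int k = 3 * (of_int q :: real)" by simp
    hence "x = of_int q" "y = of_int (m + q)" using k m by linarith+
    thus ?thesis by (metis Ints_of_int)
  next
    case 2
    hence "of_int k = 3 * (of_int q :: real) + 1" by simp
    hence "x - 1/3 = of_int q" "y - 1/3 = of_int (m + q)" using k m by linarith+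
    thus ?thesis by (metis Ints_of_int)
  next
    case 3
    hence "of_int k = 3 * (of_int q :: real) + 2" by simp
    hence "x - 2/3 = of_int q" "y - 2/3 = of_int (m + q)" using k m by linarith+
    thus ?thesis by (metis Ints_of_int)
  qed
qed

context elat
begin

lemma two6: "2 * pt 6 m n = pt 3 m n"
proof -
  have "\<And>X::complex. 2 * (X / of_int 6) = X / of_int 3" by simp
  thus ?thesis unfolding pt_def by blast
qed

lemma caseK:
  assumes s1: "s = -1" and u: "lattice_unit L e"
    and G: "\<Gamma> = {aff L u b |u b. u \<in> range (\<lambda>k. e ^ k) \<and> b \<in> {z. 2 * z \<in> L}}"
  shows "card (branch_points L \<Gamma>) = 2"
proof -
  note R = range3[OF s1]
  note pg = pow_group[OF u R(1) zero_less_numeral]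
  let ?B = "{z. 2 * z \<in> L}"
  let ?U = "range (\<lambda>k. e ^ k)"
  have BL: "L \<subseteq> ?B"
  proof
    fix l assume "l \<in> L"
    hence ll: "l + l \<in> L" using Ladd by blast
    have "2 * l = l + l" by (rule mult_2)
    thus "l \<in> ?B" unfolding mem_Collect_eq using ll by (simp only:)
  qed
  have Ba: "\<forall>x\<in>?B. \<forall>y\<in>?B. x + y \<in> ?B"
  proof (intro ballI)
    fix x y assume "x \<in> ?B" "y \<in> ?B"
    hence "2 * x + 2 * y \<in> L" using Ladd by simp
    thus "x + y \<in> ?B" by (simp add: distrib_left)
  qed
  have Bn: "\<forall>x\<in>?B. - x \<in> ?B"
  proof
    fix x assume "x \<in> ?B"
    hence "- (2 * x) \<in> L" using Lneg by simp
    thus "- x \<in> ?B" by simp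
  qed
  have BU: "\<forall>u\<in>?U. \<forall>x\<in>?B. u * x \<in> ?B"
  proof (intro ballI)
    fix u x assume "u \<in> ?U" "x \<in> ?B"
    hence "u * (2 * x) \<in> L" using pg(1) unit_mem by auto
    thus "u * x \<in> ?B" by (simp add: algebra_simps)
  qed
  have "card (branch_points L \<Gamma>) = card {pt 6 2 1, pt 6 1 2}"
  proof (rule count_bp[OF pg(1) pg(2) pg(3) pg(4) BL Ba Bn BU G])
    fix z u assume z: "z \<notin> ?B" "u \<in> ?U" "u \<noteq> 1" "(1 - u) * z \<in> ?B"
    have "(1 - u) * (2 * z) \<in> L" using z(4) by (simp add: algebra_simps)
    hence "2 * z - pt 3 2 1 \<in> L \<or> 2 * z - pt 3 1 2 \<in> L" using cover3[OF s1, of "2 * z" u] z R(2) by auto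
    hence "z - pt 6 2 1 \<in> ?B \<or> z - pt 6 1 2 \<in> ?B"
      using two6 by (simp add: right_diff_distrib)
    moreover have U1: "1 \<in> ?U" using pg(2) .
    ultimately show "\<exists>r\<in>{pt 6 2 1, pt 6 1 2}. \<exists>v\<in>?U. z - v * r \<in> ?B"
    proof (elim disjE)
      assume "z - pt 6 2 1 \<in> ?B"
      hence "z - 1 * pt 6 2 1 \<in> ?B" by simp
      thus ?thesis using U1 by blast
    next
      assume "z - pt 6 1 2 \<in> ?B"
      hence "z - 1 * pt 6 1 2 \<in> ?B" by simp
      thus ?thesis using U1 by blast
    qed
  next
    fix r assume r: "r \<in> {pt 6 2 1, pt 6 1 2}"
    have r2: "2 * r \<in> {pt 3 2 1, pt 3 1 2}" using r two6 by auto
    have "lin 0 1 \<noteq> lin 1 0" by (simp add: lin_eq)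
    hence "lin 0 1 \<noteq> 1" using lin_1 by simp
    moreover have "lin 0 1 \<in> ?U" using R(2) by simp
    moreover have "2 * r \<notin> L" using inR3(1)[OF s1 r2] .
    moreover have "(1 - lin 0 1) * (2 * r) \<in> L" using inR3(2)[OF s1 r2] .
    ultimately show "r \<notin> ?B \<and> (\<exists>u\<in>?U. u \<noteq> 1 \<and> (1 - u) * r \<in> ?B)"
      by (auto simp: algebra_simps)
  next
    fix r r' u assume h: "r \<in> {pt 6 2 1, pt 6 1 2}" "r' \<in> {pt 6 2 1, pt 6 1 2}"
      "u \<in> ?U" "r - u * r' \<in> ?B"
    have "2 * r - u * (2 * r') \<in> L" using h(4) by (simp add: algebra_simps)
    moreover have "2 * r \<in> {pt 3 2 1, pt 3 1 2}" "2 * r' \<in> {pt 3 2 1, pt 3 1 2}" using h two6 by auto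
    ultimately have "2 * r = 2 * r'" using sep3[OF s1] h(3) R(2) by blast
    thus "r = r'" by simp
  qed
  moreover have "pt 6 2 1 \<noteq> pt 6 1 2"
  proof
    assume "pt 6 2 1 = pt 6 1 2"
    hence "pt 6 2 1 - pt 6 1 2 \<in> L" using L0 by simp
    thus False by (simp add: pt_diff pt_mem)
  qed
  ultimately show ?thesis by simp
qed

lemma case4:
  assumes s0: "s = 0" and u: "lattice_unit L e"
    and G: "\<Gamma> = {aff L u b |u b. u \<in> range (\<lambda>k. e ^ k) \<and> b \<in> L}"
  shows "card (branch_points L \<Gamma>) = 2"
proof -
  have e2: "e ^ 2 = - 1" using eqn s0 by simp
  have e3: "e ^ 3 = - e"
  proof -
    have "e ^ 3 = e * e ^ 2" by (simp add: power2_eq_square power3_eq_cube)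
    thus ?thesis using e2 by simp
  qed
  have e4: "e ^ 4 = 1"
  proof -
    have "e ^ 4 = (e ^ 2) ^ 2" by (simp add: power_mult[symmetric])
    thus ?thesis using e2 by simp
  qed
  have R: "range (\<lambda>k. e ^ k) = {lin 1 0, lin 0 1, lin (-1) 0, lin 0 (-1)}"
  proof -
    have "range (\<lambda>k. e ^ k) = (\<lambda>k. e ^ k) ` {..<4}" using range_pow[OF e4] by simp
    also have "{..<4::nat} = {0, 1, 2, 3}" by auto
    finally show ?thesis using lin_1 lin_e lin_m1 lin_me e2 e3 by auto
  qed
  note pg = pow_group[OF u e4 zero_less_numeral]
  let ?U = "range (\<lambda>k. e ^ k)"
  let ?R = "{pt 2 1 0, pt 2 1 1}"
  have "card (branch_points L \<Gamma>) = card ?R"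
  proof (rule count_bp[OF pg(1) pg(2) pg(3) pg(4) B_L[OF pg(1)] G])
    fix z u assume z: "z \<notin> L" "u \<in> ?U" "u \<noteq> 1" "(1 - u) * z \<in> L"
    obtain x y where zxy: "z = of_real x * a + of_real y * (a * e)" by (rule coords)
    have c: "2 * x \<in> \<int> \<and> 2 * y \<in> \<int>"
    proof -
      from z(2,3) R lin_1 consider "u = lin 0 1" | "u = lin (-1) 0" | "u = lin 0 (-1)" by auto
      then show ?thesis
      proof cases
        case 1
        have "of_int 1 * x - of_int (-1) * y \<in> \<int> \<and> of_int 1 * y + of_int (-1) * x + of_int s * of_int (-1) * y \<in> \<int>"
          using z(4) unfolding 1 one_minus_lin zxy lin_mem by simp
        hence h: "x + y \<in> \<int>" "y - x \<in> \<int>" using s0 by (simp_all add: algebra_simps)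
        obtain k1 where k1: "x + y = of_int k1" using h(1) by (rule Ints_obtain)
        obtain k2 where k2: "y - x = of_int k2" using h(2) by (rule Ints_obtain)
        have "2 * x = of_int (k1 - k2)" "2 * y = of_int (k1 + k2)" using k1 k2 by simp_all
        thus ?thesis by (metis Ints_of_int)
      next
        case 2
        have "of_int 2 * x - of_int 0 * y \<in> \<int> \<and> of_int 2 * y + of_int 0 * x + of_int s * of_int 0 * y \<in> \<int>"
          using z(4) unfolding 2 one_minus_lin zxy lin_mem by simp
        thus ?thesis by simp
      next
        case 3
        have "of_int 1 * x - of_int 1 * y \<in> \<int> \<and> of_int 1 * y + of_int 1 * x + of_int s * of_int 1 * y \<in> \<int>"
          using z(4) unfolding 3 one_minus_lin zxy lin_mem by simp
        hence h: "x - y \<in> \<int>" "y + x \<in> \<int>" using s0 by (simp_all add: algebra_simps)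
        obtain k1 where k1: "x - y = of_int k1" using h(1) by (rule Ints_obtain)
        obtain k2 where k2: "y + x = of_int k2" using h(2) by (rule Ints_obtain)
        have "2 * x = of_int (k1 + k2)" "2 * y = of_int (k2 - k1)" using k1 k2 by simp_all
        thus ?thesis by (metis Ints_of_int)
      qed
    qed
    have l01: "lin 0 1 * pt 2 1 0 = pt 2 0 1" using s0 by (simp add: lin_pt)
    have U1: "1 \<in> ?U" "lin 0 1 \<in> ?U" using pg(2) R by auto
    from half_cases[OF c[THEN conjunct1]] half_cases[OF c[THEN conjunct2]]
    show "\<exists>r\<in>?R. \<exists>v\<in>?U. z - v * r \<in> L"
    proof (elim disjE)
      assume "x \<in> \<int>" "y \<in> \<int>"
      hence "z \<in> L" unfolding zxy using mem by simp
      thus ?thesis using z(1) by simp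
    next
      assume "x - 1/2 \<in> \<int>" "y \<in> \<int>"
      hence "z - 1 * pt 2 1 0 \<in> L" unfolding zxy using memr[of 2 x y 1 0] by simp
      thus ?thesis using U1 by blast
    next
      assume "x \<in> \<int>" "y - 1/2 \<in> \<int>"
      hence "z - lin 0 1 * pt 2 1 0 \<in> L" unfolding zxy l01 using memr[of 2 x y 0 1] by simp
      thus ?thesis using U1 by blast
    next
      assume "x - 1/2 \<in> \<int>" "y - 1/2 \<in> \<int>"
      hence "z - 1 * pt 2 1 1 \<in> L" unfolding zxy using memr[of 2 x y 1 1] by simp
      thus ?thesis using U1 by blast
    qed
  next
    fix r assume r: "r \<in> ?R"
    have "lin (-1) 0 \<noteq> lin 1 0" by (simp add: lin_eq)
    hence "lin (-1) 0 \<noteq> 1" using lin_1 by simp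
    moreover have "lin (-1) 0 \<in> ?U" using R by simp
    moreover have "r \<notin> L" "(1 - lin (-1) 0) * r \<in> L"
      using r s0 by (auto simp: one_minus_lin lin_pt pt_mem)
    ultimately show "r \<notin> L \<and> (\<exists>u\<in>?U. u \<noteq> 1 \<and> (1 - u) * r \<in> L)" by blast
  next
    fix r r' u assume "r \<in> ?R" "r' \<in> ?R" "u \<in> ?U" "r - u * r' \<in> L"
    thus "r = r'" using R s0 by (auto simp: lin_pt pt_diff pt_mem)
  qed
  moreover have "pt 2 1 0 \<noteq> pt 2 1 1"
  proof
    assume "pt 2 1 0 = pt 2 1 1"
    hence "pt 2 1 0 - pt 2 1 1 \<in> L" using L0 by simp
    thus False by (simp add: pt_diff pt_mem)
  qed
  ultimately show ?thesis by simp
qed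

end

context elat
begin

lemma case6:
  assumes s1: "s = 1" and u: "lattice_unit L e"
    and G: "\<Gamma> = {aff L u b |u b. u \<in> range (\<lambda>k. e ^ k) \<and> b \<in> L}"
  shows "card (branch_points L \<Gamma>) = 2"
proof -
  have e2: "e ^ 2 = e - 1" using eqn s1 by simp
  have e3: "e ^ 3 = - 1"
  proof -
    have "e ^ 3 = e * e ^ 2" by (simp add: power2_eq_square power3_eq_cube)
    also have "\<dots> = e * (e - 1)" unfolding e2 ..
    also have "\<dots> = e ^ 2 - e" by (simp add: power2_eq_square algebra_simps)
    also have "\<dots> = - 1" unfolding e2 by simp
    finally show ?thesis .
  qed
  have e4: "e ^ 4 = - e"
  proof -
    have "e ^ 4 = e ^ 3 * e" by (simp add: power_Suc2[symmetric])
    thus ?thesis using e3 by simp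
  qed
  have e5: "e ^ 5 = - (e ^ 2)"
  proof -
    have "e ^ 5 = e ^ 3 * e ^ 2" by (simp add: power_add[symmetric])
    thus ?thesis using e3 by simp
  qed
  have e6: "e ^ 6 = 1"
  proof -
    have "e ^ 6 = (e ^ 3) ^ 2" by (simp add: power_mult[symmetric])
    thus ?thesis using e3 by simp
  qed
  have R: "range (\<lambda>k. e ^ k) = {lin 1 0, lin 0 1, lin (-1) 1, lin (-1) 0, lin 0 (-1), lin 1 (-1)}"
  proof -
    have "range (\<lambda>k. e ^ k) = (\<lambda>k. e ^ k) ` {..<6}" using range_pow[OF e6] by simp
    also have "{..<6::nat} = {0, 1, 2, 3, 4, 5}" by auto
    finally have "range (\<lambda>k. e ^ k) = {1, e, e ^ 2, e ^ 3, e ^ 4, e ^ 5}" by simp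
    also have "\<dots> = {lin 1 0, lin 0 1, lin (-1) 1, lin (-1) 0, lin 0 (-1), lin 1 (-1)}"
      using lin_1 lin_e lin_e2 lin_m1 lin_me lin_me2 s1 e3 e4 e5 by simp
    finally show ?thesis .
  qed
  note pg = pow_group[OF u e6 zero_less_numeral]
  let ?U = "range (\<lambda>k. e ^ k)"
  let ?R = "{pt 6 3 0, pt 6 2 2}"
  have "card (branch_points L \<Gamma>) = card ?R"
  proof (rule count_bp[OF pg(1) pg(2) pg(3) pg(4) B_L[OF pg(1)] G])
    fix z u assume z: "z \<notin> L" "u \<in> ?U" "u \<noteq> 1" "(1 - u) * z \<in> L"
    obtain x y where zxy: "z = of_real x * a + of_real y * (a * e)" by (rule coords)
    have notL: "\<not> (x \<in> \<int> \<and> y \<in> \<int>)"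
    proof
      assume "x \<in> \<int> \<and> y \<in> \<int>"
      hence "z \<in> L" unfolding zxy using mem by simp
      thus False using z(1) by simp
    qed
    have c: "(2 * x \<in> \<int> \<and> 2 * y \<in> \<int>) \<or> (y - x \<in> \<int> \<and> 3 * x \<in> \<int>)"
    proof -
      from z(2,3) R lin_1 consider "u = lin 0 1" | "u = lin (-1) 1" | "u = lin (-1) 0"
        | "u = lin 0 (-1)" | "u = lin 1 (-1)" by auto
      then show ?thesis
      proof cases
        case 1
        have "of_int 1 * x - of_int (-1) * y \<in> \<int> \<and> of_int 1 * y + of_int (-1) * x + of_int s * of_int (-1) * y \<in> \<int>"
          using z(4) unfolding 1 one_minus_lin zxy lin_mem by simp
        hence h: "x + y \<in> \<int>" "- x \<in> \<int>" using s1 by (simp_all add: algebra_simps)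
        obtain k1 where k1: "x + y = of_int k1" using h(1) by (rule Ints_obtain)
        obtain k2 where k2: "- x = of_int k2" using h(2) by (rule Ints_obtain)
        have "x = of_int (- k2)" "y = of_int (k1 + k2)" using k1 k2 by simp_all
        hence "x \<in> \<int> \<and> y \<in> \<int>" by (metis Ints_of_int)
        thus ?thesis using notL by simp
      next
        case 2
        have "of_int 2 * x - of_int (-1) * y \<in> \<int> \<and> of_int 2 * y + of_int (-1) * x + of_int s * of_int (-1) * y \<in> \<int>"
          using z(4) unfolding 2 one_minus_lin zxy lin_mem by simp
        hence h: "2 * x + y \<in> \<int>" "y - x \<in> \<int>" using s1 by (simp_all add: algebra_simps)
        obtain k1 where k1: "2 * x + y = of_int k1" using h(1) by (rule Ints_obtain)
        obtain k2 where k2: "y - x = of_int k2" using h(2) by (rule Ints_obtain)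
        have "3 * x = of_int (k1 - k2)" using k1 k2 by simp
        thus ?thesis using h(2) by (metis Ints_of_int)
      next
        case 3
        have "of_int 2 * x - of_int 0 * y \<in> \<int> \<and> of_int 2 * y + of_int 0 * x + of_int s * of_int 0 * y \<in> \<int>"
          using z(4) unfolding 3 one_minus_lin zxy lin_mem by simp
        thus ?thesis by simp
      next
        case 4
        have "of_int 1 * x - of_int 1 * y \<in> \<int> \<and> of_int 1 * y + of_int 1 * x + of_int s * of_int 1 * y \<in> \<int>"
          using z(4) unfolding 4 one_minus_lin zxy lin_mem by simp
        hence h: "x - y \<in> \<int>" "y + y + x \<in> \<int>" using s1 by (simp_all add: algebra_simps)
        obtain k1 where k1: "x - y = of_int k1" using h(1) by (rule Ints_obtain)
        obtain k2 where k2: "y + y + x = of_int k2" using h(2) by (rule Ints_obtain)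
        have "3 * x = of_int (k2 + 2 * k1)" "y - x = of_int (- k1)" using k1 k2 by simp_all
        thus ?thesis by (metis Ints_of_int)
      next
        case 5
        have "of_int 0 * x - of_int 1 * y \<in> \<int> \<and> of_int 0 * y + of_int 1 * x + of_int s * of_int 1 * y \<in> \<int>"
          using z(4) unfolding 5 one_minus_lin zxy lin_mem by simp
        hence h: "- y \<in> \<int>" "x + y \<in> \<int>" using s1 by (simp_all add: algebra_simps)
        obtain k1 where k1: "- y = of_int k1" using h(1) by (rule Ints_obtain)
        obtain k2 where k2: "x + y = of_int k2" using h(2) by (rule Ints_obtain)
        have "x = of_int (k2 + k1)" "y = of_int (- k1)" using k1 k2 by simp_all
        hence "x \<in> \<int> \<and> y \<in> \<int>" by (metis Ints_of_int)
        thus ?thesis using notL by simp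
      qed
    qed
    have U1: "1 \<in> ?U" "lin 0 1 \<in> ?U" "lin (-1) 1 \<in> ?U" "lin (-1) 0 \<in> ?U" using pg(2) R by auto
    have m1: "lin 0 1 * pt 6 3 0 = pt 6 0 3" using s1 by (simp add: lin_pt)
    have m2: "lin (-1) 1 * pt 6 3 0 = pt 6 (-3) 3" using s1 by (simp add: lin_pt)
    have m3: "lin (-1) 0 * pt 6 2 2 = pt 6 (-2) (-2)" using s1 by (simp add: lin_pt)
    from c show "\<exists>r\<in>?R. \<exists>v\<in>?U. z - v * r \<in> L"
    proof (elim disjE conjE)
      assume h: "2 * x \<in> \<int>" "2 * y \<in> \<int>"
      from half_cases[OF h(1)] half_cases[OF h(2)]
      show ?thesis
      proof (elim disjE)
        assume "x \<in> \<int>" "y \<in> \<int>"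
        thus ?thesis using notL by simp
      next
        assume "x - 1/2 \<in> \<int>" "y \<in> \<int>"
        hence "z - 1 * pt 6 3 0 \<in> L" unfolding zxy using memr[of 6 x y 3 0] by simp
        thus ?thesis using U1 by blast
      next
        assume "x \<in> \<int>" "y - 1/2 \<in> \<int>"
        hence "z - lin 0 1 * pt 6 3 0 \<in> L" unfolding zxy m1 using memr[of 6 x y 0 3] by simp
        thus ?thesis using U1 by blast
      next
        assume hx: "x - 1/2 \<in> \<int>" and hy: "y - 1/2 \<in> \<int>"
        have "(x - 1/2) + 1 \<in> \<int>" using hx by (intro Ints_add) auto
        hence "x + 1/2 \<in> \<int>" by (simp add: add.commute)
        hence "z - lin (-1) 1 * pt 6 3 0 \<in> L" unfolding zxy m2 using hy memr[of 6 x y "-3" 3] by simp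
        thus ?thesis using U1 by blast
      qed
    next
      assume h: "y - x \<in> \<int>" "3 * x \<in> \<int>"
      from third_b[OF h] show ?thesis
      proof (elim disjE conjE)
        assume "x \<in> \<int>" "y \<in> \<int>"
        thus ?thesis using notL by simp
      next
        assume "x - 1/3 \<in> \<int>" "y - 1/3 \<in> \<int>"
        hence "z - 1 * pt 6 2 2 \<in> L" unfolding zxy using memr[of 6 x y 2 2] by simp
        thus ?thesis using U1 by blast
      next
        assume hx: "x - 2/3 \<in> \<int>" and hy: "y - 2/3 \<in> \<int>"
        have "(x - 2/3) + 1 \<in> \<int>" using hx by (intro Ints_add) auto
        hence hx': "x + 1/3 \<in> \<int>" by (simp add: add.commute)
        have "(y - 2/3) + 1 \<in> \<int>" using hy by (intro Ints_add) auto
        hence hy': "y + 1/3 \<in> \<int>" by (simp add: add.commute)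
        have "z - lin (-1) 0 * pt 6 2 2 \<in> L" unfolding zxy m3 using hx' hy' memr[of 6 x y "-2" "-2"] by simp
        thus ?thesis using U1 by blast
      qed
    qed
  next
    fix r assume r: "r \<in> ?R"
    have "lin (-1) 0 \<noteq> lin 1 0" "lin (-1) 1 \<noteq> lin 1 0" by (simp_all add: lin_eq)
    hence n1: "lin (-1) 0 \<noteq> 1" "lin (-1) 1 \<noteq> 1" using lin_1 by simp_all
    have U1: "lin (-1) 1 \<in> ?U" "lin (-1) 0 \<in> ?U" using R by auto
    from r consider "r = pt 6 3 0" | "r = pt 6 2 2" by blast
    then show "r \<notin> L \<and> (\<exists>u\<in>?U. u \<noteq> 1 \<and> (1 - u) * r \<in> L)"
    proof cases
      case 1
      note r = 1
      have "r \<notin> L" "(1 - lin (-1) 0) * r \<in> L" using s1 unfolding r by (auto simp: one_minus_lin lin_pt pt_mem)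
      thus ?thesis using n1 U1 by blast
    next
      case 2
      note r = 2
      have "r \<notin> L" "(1 - lin (-1) 1) * r \<in> L" using s1 unfolding r by (auto simp: one_minus_lin lin_pt pt_mem)
      thus ?thesis using n1 U1 by blast
    qed
  next
    fix r r' u assume "r \<in> ?R" "r' \<in> ?R" "u \<in> ?U" "r - u * r' \<in> L"
    thus "r = r'" using R s1 by (auto simp: lin_pt pt_diff pt_mem)
  qed
  moreover have "pt 6 3 0 \<noteq> pt 6 2 2"
  proof
    assume "pt 6 3 0 = pt 6 2 2"
    hence "pt 6 3 0 - pt 6 2 2 \<in> L" using L0 by simp
    thus False by (simp add: pt_diff pt_mem)
  qed
  ultimately show ?thesis by simp
qed

end

context lat
begin

lemma caseC2:
  assumes BL: "L \<subseteq> B" and Ba: "\<forall>x\<in>B. \<forall>y\<in>B. x + y \<in> B" and Bn: "\<forall>x\<in>B. - x \<in> B"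
    and d: "d > (0::nat)" and Bd: "\<forall>x\<in>B. of_nat d * x \<in> L"
    and G: "\<Gamma> = {aff L u b |u b. u \<in> {1, -1} \<and> b \<in> B}"
  shows "card (branch_points L \<Gamma>) = 3"
proof -
  obtain b1 b2 where bb: "Re b1 * Im b2 - Im b1 * Re b2 \<noteq> 0" "lattice b1 b2 = B"
    using hnf[OF BL Ba Bn d Bd] by blast
  interpret M: lat b1 b2 using bb(1) by unfold_locales
  have Uu: "\<forall>u\<in>{1, -1}. lattice_unit L u" using unit_1 unit_m1 by auto
  have U1: "(1::complex) \<in> {1, -1}" by simp
  have Um: "\<forall>u\<in>{1, -1}. \<forall>v\<in>{1, -1}. u * v \<in> {1, -1::complex}" by auto
  have Ui: "\<forall>u\<in>{1, -1}. inverse u \<in> {1, -1::complex}" by auto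
  have BU: "\<forall>u\<in>{1, -1}. \<forall>x\<in>B. u * x \<in> B" using Bn by auto
  let ?R = "{M.pt 2 1 0, M.pt 2 0 1, M.pt 2 1 1}"
  have "card (branch_points L \<Gamma>) = card ?R"
  proof (rule count_bp[OF Uu U1 Um Ui BL Ba Bn BU G])
    fix z u assume z: "z \<notin> B" "u \<in> {1, -1}" "u \<noteq> 1" "(1 - u) * z \<in> B"
    have "u = -1" using z(2,3) by simp
    hence z2: "2 * z \<in> B" using z(4) by simp
    obtain x y where zxy: "z = of_real x * b1 + of_real y * b2" using M.decomp[of z] by blast
    have e2: "2 * z = of_real (2 * x) * b1 + of_real (2 * y) * b2" unfolding zxy by (simp add: algebra_simps)
    have "of_real (2 * x) * b1 + of_real (2 * y) * b2 \<in> M.L"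
      unfolding e2[symmetric] bb(2) by (rule z2)
    hence "2 * x \<in> \<int> \<and> 2 * y \<in> \<int>" by (simp only: M.mem)
    hence h: "2 * x \<in> \<int>" "2 * y \<in> \<int>" by auto
    have one: "(1::complex) \<in> {1, -1}" by simp
    from half_cases[OF h(1)] half_cases[OF h(2)]
    show "\<exists>r\<in>?R. \<exists>v\<in>{1, -1}. z - v * r \<in> B"
    proof (elim disjE)
      assume "x \<in> \<int>" "y \<in> \<int>"
      hence "z \<in> B" unfolding zxy using M.mem bb(2) by simp
      thus ?thesis using z(1) by simp
    next
      assume "x - 1/2 \<in> \<int>" "y \<in> \<int>"
      hence "z - 1 * M.pt 2 1 0 \<in> B" unfolding zxy bb(2)[symmetric] using M.memr[of 2 x y 1 0] by simp
      thus ?thesis using one by blast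
    next
      assume "x \<in> \<int>" "y - 1/2 \<in> \<int>"
      hence "z - 1 * M.pt 2 0 1 \<in> B" unfolding zxy bb(2)[symmetric] using M.memr[of 2 x y 0 1] by simp
      thus ?thesis using one by blast
    next
      assume "x - 1/2 \<in> \<int>" "y - 1/2 \<in> \<int>"
      hence "z - 1 * M.pt 2 1 1 \<in> B" unfolding zxy bb(2)[symmetric] using M.memr[of 2 x y 1 1] by simp
      thus ?thesis using one by blast
    qed
  next
    fix r assume r: "r \<in> ?R"
    have two: "2 * M.pt 2 i j = M.pt 2 (2 * i) (2 * j)" for i j
      using M.pt_mult[of 2 2 i j] by simp
    have "r \<notin> B \<and> (1 - (-1)) * r \<in> B"
      using r unfolding bb(2)[symmetric] by (auto simp: two M.pt_mem)
    moreover have "(-1::complex) \<in> {1, -1}" "(-1::complex) \<noteq> 1" by auto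
    ultimately show "r \<notin> B \<and> (\<exists>u\<in>{1, -1}. u \<noteq> 1 \<and> (1 - u) * r \<in> B)" by blast
  next
    fix r r' u assume "r \<in> ?R" "r' \<in> ?R" "u \<in> {1, -1}" "r - u * r' \<in> B"
    thus "r = r'" unfolding bb(2)[symmetric]
      by (auto simp: M.pt_diff M.pt_add M.pt_neg M.pt_mem)
  qed
  moreover have "card ?R = 3"
  proof -
    have "M.pt 2 1 0 - M.pt 2 0 1 \<notin> M.L" "M.pt 2 1 0 - M.pt 2 1 1 \<notin> M.L" "M.pt 2 0 1 - M.pt 2 1 1 \<notin> M.L"
      by (simp_all add: M.pt_diff M.pt_mem)
    hence "M.pt 2 1 0 \<noteq> M.pt 2 0 1" "M.pt 2 1 0 \<noteq> M.pt 2 1 1" "M.pt 2 0 1 \<noteq> M.pt 2 1 1"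
      using M.L0 by auto
    thus ?thesis by simp
  qed
  ultimately show ?thesis by simp
qed

end

lemma lin_solve:
  fixes x e :: complex
  assumes h: "x + of_int c * e + 1 = 0"
  shows "x = of_int (- c) * e - 1"
proof -
  have "x = (x + of_int c * e + 1) - of_int c * e - 1" by simp
  also have "\<dots> = of_int (- c) * e - 1" using h by simp
  finally show ?thesis .
qed

context lat
begin

lemma part1:
  assumes "\<Gamma> \<subseteq> transl L"
  shows "card (branch_points L \<Gamma>) = 0"
proof -
  have "branch_points L \<Gamma> = {}"
  proof (rule ccontr)
    assume "branch_points L \<Gamma> \<noteq> {}"
    then obtain P \<gamma> where P: "P \<in> punctured L \<Gamma>" "\<gamma> \<in> \<Gamma>" "\<gamma> \<noteq> idT L" "\<gamma> P = P"
      unfolding branch_points_def by blast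
    obtain b where b: "\<gamma> = aff L 1 b" using P(2) assms unfolding transl_def by blast
    have "P \<in> torus L" using P(1) unfolding punctured_def by blast
    then obtain z where z: "P = coset L z" by (auto elim: torusE)
    have "1 * z + b - z \<in> L" using P(4) unfolding b z by (simp add: aff_coset unit_1 coset_eq)
    hence "b - 0 \<in> L" by simp
    hence "\<gamma> = idT L" unfolding b idT_def using unit_1 by (simp add: aff_eq)
    thus False using P(3) by simp
  qed
  thus ?thesis by simp
qed

lemma rot_group:
  assumes "cyclic_of_order L G l" "G \<subseteq> Aut0 L"
  shows "\<exists>e. lattice_unit L e \<and> G = (\<lambda>x. aff L x 0) ` range (\<lambda>k. e ^ k) \<and>
    card (range (\<lambda>k. e ^ k)) = l"
proof -
  obtain g where g: "g \<in> Aut L" "G = cyc L g" "finite G" "card G = l"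
    using assms(1) unfolding cyclic_of_order_def by blast
  have "g \<in> G" using cyc_self[OF g(1)] g(2) by simp
  then obtain e where e: "g = aff L e 0" "lattice_unit L e" using assms(2) unfolding Aut0_def by blast
  have Geq: "G = (\<lambda>x. aff L x 0) ` range (\<lambda>k. e ^ k)"
    unfolding g(2) e(1) cyc_def using pow_rot[OF e(2)] by auto
  have "inj_on (\<lambda>x. aff L x 0) (range (\<lambda>k. e ^ k))"
    by (rule inj_onI) (use unit_pow[OF e(2)] in \<open>auto simp: aff_eq\<close>)
  hence "card (range (\<lambda>k. e ^ k)) = l" using g(4) Geq card_image by metis
  thus ?thesis using Geq e(2) by blast
qed

lemma unit_order:
  assumes "lattice_unit L e" "card (range (\<lambda>k. e ^ k)) = l"
  shows "e ^ l = 1" "\<And>j. 0 < j \<Longrightarrow> j < l \<Longrightarrow> e ^ j \<noteq> 1" "l > 0"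
proof -
  obtain n where n: "n > 0" "e ^ n = 1" using assms(1) unfolding lattice_unit_def by blast
  obtain m where m: "m > 0" "e ^ m = 1" "\<And>j. 0 < j \<Longrightarrow> j < m \<Longrightarrow> e ^ j \<noteq> 1"
    "card (range (\<lambda>k. e ^ k)) = m" using root_order[OF n(2) n(1)] by blast
  have "m = l" using m(4) assms(2) by simp
  thus "e ^ l = 1" "\<And>j. 0 < j \<Longrightarrow> j < l \<Longrightarrow> e ^ j \<noteq> 1" "l > 0" using m by auto
qed

lemma eq_s:
  assumes u: "lattice_unit L e" and c: "card (range (\<lambda>k. e ^ k)) = l" and l: "l \<in> {3, 4, 6}"
  shows "\<exists>s::int. s \<in> {-1, 0, 1} \<and> e ^ 2 = of_int s * e - 1 \<and>
     (l = 3 \<longrightarrow> s = -1) \<and> (l = 4 \<longrightarrow> s = 0) \<and> (l = 6 \<longrightarrow> s = 1)"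
proof -
  note o = unit_order[OF u c]
  from l consider "l = 3" | "l = 4" | "l = 6" by auto
  thus ?thesis
  proof cases
    case 1
    have "e ^ 3 = 1" "e \<noteq> 1" using o(1) o(2)[of 1] 1 by auto
    hence "(e - 1) * (e ^ 2 + e + 1) = 0" by (simp add: power2_eq_square power3_eq_cube algebra_simps)
    hence "e - 1 = 0 \<or> e ^ 2 + e + 1 = 0" by (simp only: mult_eq_0_iff)
    hence "e ^ 2 + e + 1 = 0" using \<open>e \<noteq> 1\<close> by simp
    hence "e ^ 2 + of_int 1 * e + 1 = 0" by simp
    from lin_solve[OF this] have "e ^ 2 = of_int (-1) * e - 1" by simp
    thus ?thesis using 1 by (intro exI[of _ "-1"]) auto
  next
    case 2
    have "e ^ 4 = 1" "e ^ 2 \<noteq> 1" using o(1) o(2)[of 2] 2 by auto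
    moreover have "e ^ 4 - 1 = (e ^ 2 - 1) * (e ^ 2 + 1)"
      by (simp add: power2_eq_square algebra_simps power4_eq_xxxx)
    ultimately have "(e ^ 2 - 1) * (e ^ 2 + 1) = 0" by simp
    hence "e ^ 2 - 1 = 0 \<or> e ^ 2 + 1 = 0" by (simp only: mult_eq_0_iff)
    hence "e ^ 2 + 1 = 0" using \<open>e ^ 2 \<noteq> 1\<close> by simp
    hence "e ^ 2 + of_int 0 * e + 1 = 0" by simp
    from lin_solve[OF this] have "e ^ 2 = of_int 0 * e - 1" by simp
    thus ?thesis using 2 by (intro exI[of _ 0]) auto
  next
    case 3
    have e6: "e ^ 6 = 1" "e ^ 2 \<noteq> 1" "e ^ 3 \<noteq> 1" using o(1) o(2)[of 2] o(2)[of 3] 3 by auto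
    have "e ^ 6 - 1 = (e ^ 3 - 1) * (e ^ 3 + 1)"
      by (simp add: power_mult[symmetric] algebra_simps power2_eq_square[symmetric])
    hence "(e ^ 3 - 1) * (e ^ 3 + 1) = 0" using e6 by simp
    hence "e ^ 3 - 1 = 0 \<or> e ^ 3 + 1 = 0" by (simp only: mult_eq_0_iff)
    hence "e ^ 3 + 1 = 0" using e6 by simp
    hence e3: "e ^ 3 = - 1" by (simp add: eq_neg_iff_add_eq_0)
    have "e \<noteq> - 1" using e6(2) by auto
    moreover have "(e + 1) * (e ^ 2 - e + 1) = e ^ 3 + 1"
      by (simp add: power2_eq_square power3_eq_cube algebra_simps)
    moreover have "e ^ 3 + 1 = 0" using e3 by simp
    ultimately have "(e + 1) * (e ^ 2 - e + 1) = 0" by simp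
    hence "e + 1 = 0 \<or> e ^ 2 - e + 1 = 0" by (simp only: mult_eq_0_iff)
    moreover have "e + 1 \<noteq> 0" using \<open>e \<noteq> - 1\<close> by (simp add: eq_neg_iff_add_eq_0[symmetric])
    ultimately have "e ^ 2 - e + 1 = 0" by simp
    hence "e ^ 2 + of_int (-1) * e + 1 = 0" by simp
    from lin_solve[OF this] have "e ^ 2 = of_int 1 * e - 1" by simp
    thus ?thesis using 3 by (intro exI[of _ 1]) auto
  qed
qed

end

context lat
begin

lemma BL_conds:
  assumes "\<forall>u\<in>U. lattice_unit L u"
  shows "L \<subseteq> L" "\<forall>x\<in>L. \<forall>y\<in>L. x + y \<in> L" "\<forall>x\<in>L. - x \<in> L" "\<forall>u\<in>U. \<forall>x\<in>L. u * x \<in> L"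
  using Ladd Lneg unit_mem assms by auto

lemma get_basis:
  assumes u: "lattice_unit L e" and c: "card (range (\<lambda>k. e ^ k)) = l" and l: "l \<in> {3, 4, 6}"
  obtains s \<alpha> where "elat \<alpha> e s" "lattice \<alpha> (\<alpha> * e) = L"
    "l = 3 \<longrightarrow> s = -1" "l = 4 \<longrightarrow> s = 0" "l = 6 \<longrightarrow> s = 1"
proof -
  obtain s :: int where s: "s \<in> {-1, 0, 1}" "e ^ 2 = of_int s * e - 1"
    "l = 3 \<longrightarrow> s = -1" "l = 4 \<longrightarrow> s = 0" "l = 6 \<longrightarrow> s = 1"
    using eq_s[OF u c l] by blast
  interpret E1: elat 1 e s using s by unfold_locales auto
  obtain \<alpha> where \<alpha>: "\<alpha> \<noteq> 0" "lattice \<alpha> (\<alpha> * e) = L"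
    using euclid[OF u E1.e_facts(2) E1.e_facts(3) E1.e_facts(4)] by blast
  have "elat \<alpha> e s" using s \<alpha> by unfold_locales auto
  thus thesis using that \<alpha>(2) s by blast
qed

lemma Gamma_rot:
  assumes Gs: "aut_subgroup L \<Gamma>" and sd: "semidir L \<Gamma> G {idT L}"
    and u: "lattice_unit L e" and Geq: "G = (\<lambda>x. aff L x 0) ` range (\<lambda>k. e ^ k)"
    and el: "e ^ l = 1" "l > 0"
  shows "\<Gamma> = {aff L u b |u b. u \<in> range (\<lambda>k. e ^ k) \<and> b \<in> L}"
proof -
  note pg = pow_group[OF u el]
  let ?H = "{aff L u b |u b. u \<in> range (\<lambda>k. e ^ k) \<and> b \<in> L}"
  have HS: "aut_subgroup L ?H"
    using H_subgroup[OF pg BL_conds[OF pg(1)]] .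
  have G\<Gamma>: "\<Gamma> = generated L (G \<union> {idT L})" using sd unfolding semidir_def by blast
  have "G \<union> {idT L} \<subseteq> ?H"
  proof
    fix f assume "f \<in> G \<union> {idT L}"
    moreover have "idT L = aff L 1 0" unfolding idT_def ..
    ultimately show "f \<in> ?H" using Geq pg(2) L0 by auto
  qed
  hence "\<Gamma> \<subseteq> ?H" using gen_le[OF HS] G\<Gamma> by simp
  moreover have "?H \<subseteq> \<Gamma>"
  proof
    fix f assume "f \<in> ?H"
    then obtain u b where ub: "f = aff L u b" "u \<in> range (\<lambda>k. e ^ k)" "b \<in> L" by blast
    have uu: "lattice_unit L u" using ub(2) pg(1) by blast
    have "aff L u b = aff L u 0" using aff_eq[OF uu uu] ub(3) by simp
    moreover have "aff L u 0 \<in> G" using Geq ub(2) by blast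
    moreover have "G \<subseteq> \<Gamma>" using gen_ge[of "G \<union> {idT L}" L] G\<Gamma> by auto
    ultimately show "f \<in> \<Gamma>" using ub(1) by auto
  qed
  ultimately show ?thesis by blast
qed

lemma part2a:
  assumes Gs: "aut_subgroup L \<Gamma>" and l: "l \<in> {3, 4, 6}" and cG: "cyclic_of_order L G l"
    and sd: "semidir L \<Gamma> G {idT L}"
  shows "card (branch_points L \<Gamma>) = 2"
proof -
  have GA: "G \<subseteq> Aut0 L" using sd unfolding semidir_def by blast
  obtain e where e: "lattice_unit L e" "G = (\<lambda>x. aff L x 0) ` range (\<lambda>k. e ^ k)"
    "card (range (\<lambda>k. e ^ k)) = l" using rot_group[OF cG GA] by blast
  note o = unit_order[OF e(1) e(3)]
  have \<Gamma>eq: "\<Gamma> = {aff L u b |u b. u \<in> range (\<lambda>k. e ^ k) \<and> b \<in> L}"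
    using Gamma_rot[OF Gs sd e(1) e(2) o(1) o(3)] .
  obtain s \<alpha> where E: "elat \<alpha> e s" "lattice \<alpha> (\<alpha> * e) = L"
    "l = 3 \<longrightarrow> s = -1" "l = 4 \<longrightarrow> s = 0" "l = 6 \<longrightarrow> s = 1"
    using get_basis[OF e(1) e(3) l] by blast
  interpret E: elat \<alpha> e s using E(1) .
  from l consider "l = 3" | "l = 4" | "l = 6" by auto
  thus ?thesis
  proof cases
    case 1
    thus ?thesis using E.case3[unfolded E(2)] E(3) e(1) \<Gamma>eq by blast
  next
    case 2
    thus ?thesis using E.case4[unfolded E(2)] E(4) e(1) \<Gamma>eq by blast
  next
    case 3
    thus ?thesis using E.case6[unfolded E(2)] E(5) e(1) \<Gamma>eq by blast
  qed
qed

end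

context lat
begin

lemma half_conds:
  assumes Uu: "\<forall>u\<in>U. lattice_unit L u"
  shows "L \<subseteq> {z. 2 * z \<in> L}" "\<forall>x\<in>{z. 2 * z \<in> L}. \<forall>y\<in>{z. 2 * z \<in> L}. x + y \<in> {z. 2 * z \<in> L}"
    "\<forall>x\<in>{z. 2 * z \<in> L}. - x \<in> {z. 2 * z \<in> L}" "\<forall>u\<in>U. \<forall>x\<in>{z. 2 * z \<in> L}. u * x \<in> {z. 2 * z \<in> L}"
proof -
  show "L \<subseteq> {z. 2 * z \<in> L}"
  proof
    fix l assume "l \<in> L"
    hence ll: "l + l \<in> L" using Ladd by blast
    have "2 * l = l + l" by (rule mult_2)
    thus "l \<in> {z. 2 * z \<in> L}" unfolding mem_Collect_eq using ll by (simp only:)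
  qed
  show "\<forall>x\<in>{z. 2 * z \<in> L}. \<forall>y\<in>{z. 2 * z \<in> L}. x + y \<in> {z. 2 * z \<in> L}"
  proof (intro ballI)
    fix x y assume "x \<in> {z. 2 * z \<in> L}" "y \<in> {z. 2 * z \<in> L}"
    hence "2 * x + 2 * y \<in> L" using Ladd by simp
    thus "x + y \<in> {z. 2 * z \<in> L}" by (simp add: distrib_left)
  qed
  show "\<forall>x\<in>{z. 2 * z \<in> L}. - x \<in> {z. 2 * z \<in> L}"
  proof
    fix x assume "x \<in> {z. 2 * z \<in> L}"
    hence "- (2 * x) \<in> L" using Lneg by simp
    thus "- x \<in> {z. 2 * z \<in> L}" by simp
  qed
  show "\<forall>u\<in>U. \<forall>x\<in>{z. 2 * z \<in> L}. u * x \<in> {z. 2 * z \<in> L}"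
  proof (intro ballI)
    fix u x assume "u \<in> U" "x \<in> {z. 2 * z \<in> L}"
    hence "u * (2 * x) \<in> L" using Uu unit_mem by auto
    thus "u * x \<in> {z. 2 * z \<in> L}" by (simp add: algebra_simps)
  qed
qed

lemma card3_le: "card {x, y, z} \<le> 3"
  by (simp add: card_insert_if)

lemma part2b:
  assumes Gs: "aut_subgroup L \<Gamma>" and cG: "cyclic_of_order L G 3" and kf: "klein_four L K"
    and sd: "semidir L \<Gamma> G K"
  shows "card (branch_points L \<Gamma>) = 2"
proof -
  have GA: "G \<subseteq> Aut0 L" and KT: "K \<subseteq> transl L" and G\<Gamma>: "\<Gamma> = generated L (G \<union> K)"
    using sd unfolding semidir_def by blast+
  have GsubG: "G \<subseteq> \<Gamma>" and KsubG: "K \<subseteq> \<Gamma>" using gen_ge[of "G \<union> K" L] G\<Gamma> by auto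
  obtain e where e: "lattice_unit L e" "G = (\<lambda>x. aff L x 0) ` range (\<lambda>k. e ^ k)"
    "card (range (\<lambda>k. e ^ k)) = 3" using rot_group[OF cG GA] by blast
  note o = unit_order[OF e(1) e(3)]
  have l3: "3 \<in> {3, 4, 6::nat}" by simp
  obtain s \<alpha> where E0: "elat \<alpha> e s" "lattice \<alpha> (\<alpha> * e) = L"
    "3 = (3::nat) \<longrightarrow> s = -1" "3 = (4::nat) \<longrightarrow> s = 0" "3 = (6::nat) \<longrightarrow> s = 1"
    by (rule get_basis[OF e(1) e(3) l3])
  have E: "elat \<alpha> e s" "lattice \<alpha> (\<alpha> * e) = L" "s = -1" using E0 by auto
  interpret E: elat \<alpha> e s using E(1) .
  note pg = pow_group[OF e(1) o(1) o(3)]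
  let ?B = "{z. 2 * z \<in> L}"
  let ?U = "range (\<lambda>k. e ^ k)"
  let ?H = "{aff L u b |u b. u \<in> ?U \<and> b \<in> ?B}"
  note hc = half_conds[OF pg(1)]
  have HS: "aut_subgroup L ?H" using H_subgroup[OF pg hc] .
  obtain fa fb where kk: "fa \<in> Aut L" "fb \<in> Aut L" "K = {idT L, fa, fb, compT L fa fb}"
    "card K = 4" "compT L fa fa = idT L" "compT L fb fb = idT L"
    using kf unfolding klein_four_def by blast
  obtain s0 where s0: "fa = aff L 1 s0" using KT kk(3) unfolding transl_def by blast
  obtain t0 where t0: "fb = aff L 1 t0" using KT kk(3) unfolding transl_def by blast
  have "aff L 1 (s0 + s0) = aff L 1 0" using kk(5) unfolding s0 idT_def by (simp add: compT_aff unit_1)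
  hence "s0 + s0 - 0 \<in> L" using aff_eq[OF unit_1 unit_1] by blast
  moreover have "2 * s0 = s0 + s0 - 0" by (simp only: mult_2 diff_zero)
  ultimately have s02: "2 * s0 \<in> L" by (simp only:)
  have "aff L 1 (t0 + t0) = aff L 1 0" using kk(6) unfolding t0 idT_def by (simp add: compT_aff unit_1)
  hence "t0 + t0 - 0 \<in> L" using aff_eq[OF unit_1 unit_1] by blast
  moreover have "2 * t0 = t0 + t0 - 0" by (simp only: mult_2 diff_zero)
  ultimately have t02: "2 * t0 \<in> L" by (simp only:)
  have s0L: "s0 \<notin> L"
  proof
    assume "s0 \<in> L"
    hence "fa = idT L" unfolding s0 idT_def using aff_eq[OF unit_1 unit_1] by simp
    hence "K = {idT L, fb, compT L fa fb}" using kk(3) by auto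
    thus False using kk(4) card3_le[of "idT L" fb "compT L fa fb"] by simp
  qed
  have "\<Gamma> \<subseteq> ?H"
  proof -
    have "G \<union> K \<subseteq> ?H"
    proof
      fix f assume "f \<in> G \<union> K"
      then consider "f \<in> G" | "f = idT L" | "f = fa" | "f = fb" | "f = compT L fa fb"
        using kk(3) by blast
      thus "f \<in> ?H"
      proof cases
        case 1
        then obtain k where "f = aff L (e ^ k) 0" using e(2) by auto
        moreover have "2 * (0::complex) \<in> L" using L0 by simp
        ultimately show ?thesis by blast
      next
        case 2
        hence "f = aff L 1 0" unfolding idT_def .
        moreover have "2 * (0::complex) \<in> L" using L0 by simp
        ultimately show ?thesis using pg(2) by blast
      next
        case 3 thus ?thesis using s0 s02 pg(2) by blast
      next
        case 4 thus ?thesis using t0 t02 pg(2) by blast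
      next
        case 5
        hence "f = aff L 1 (t0 + s0)" unfolding s0 t0 by (simp add: compT_aff unit_1)
        moreover have "2 * (t0 + s0) \<in> L" using s02 t02 Ladd by (simp add: distrib_left)
        ultimately show ?thesis using pg(2) by blast
      qed
    qed
    thus ?thesis using gen_le[OF HS] G\<Gamma> by simp
  qed
  moreover have "?H \<subseteq> \<Gamma>"
  proof -
    define T where "T = {x. aff L 1 x \<in> \<Gamma>}"
    have comp: "compT L f g \<in> \<Gamma>" if "f \<in> \<Gamma>" "g \<in> \<Gamma>" for f g
      using Gs that unfolding aut_subgroup_def by blast
    have idG: "idT L \<in> \<Gamma>" using Gs unfolding aut_subgroup_def by blast
    have Tmod: "y \<in> T" if "x \<in> T" "y - x \<in> L" for x y
    proof -
      have "aff L 1 y = aff L 1 x" using aff_eq[OF unit_1 unit_1] that(2) by simp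
      thus ?thesis using that(1) unfolding T_def by simp
    qed
    have s0T: "s0 \<in> T" unfolding T_def using KsubG kk(3) s0 by auto
    have "aff L (e ^ 1) 0 \<in> G" unfolding e(2) by (rule imageI) (rule rangeI)
    moreover have "aff L (e ^ 2) 0 \<in> G" unfolding e(2) by (rule imageI) (rule rangeI)
    ultimately have eG: "aff L e 0 \<in> \<Gamma>" "aff L (e ^ 2) 0 \<in> \<Gamma>" using GsubG by auto
    have e3: "e ^ 3 = 1" using o(1) .
    have Te: "e * x \<in> T" if "x \<in> T" for x
    proof -
      have "compT L (compT L (aff L e 0) (aff L 1 x)) (aff L (e ^ 2) 0) = aff L (e * e ^ 2) (e * x)"
        using e(1) unit_1 unit_pow[OF e(1)] unit_mult[OF e(1) unit_1] by (simp add: compT_aff)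
      also have "e * e ^ 2 = e ^ 3" by (simp add: power2_eq_square power3_eq_cube)
      finally have "compT L (compT L (aff L e 0) (aff L 1 x)) (aff L (e ^ 2) 0) = aff L 1 (e * x)"
        using e3 by simp
      moreover have "compT L (compT L (aff L e 0) (aff L 1 x)) (aff L (e ^ 2) 0) \<in> \<Gamma>"
        using comp eG that unfolding T_def by blast
      ultimately show ?thesis unfolding T_def by simp
    qed
    note LL = E(2)
    have step: "E.pt 2 (- n) (m - n) \<in> T" if "E.pt 2 m n \<in> T" for m n
    proof -
      have "E.lin 0 1 * E.pt 2 m n = E.pt 2 (- n) (m - n)" using E(3) by (simp add: E.lin_pt)
      thus ?thesis using Te[OF that] E.lin_e by simp
    qed
    have pmod: "E.pt 2 m' n' \<in> T" if "E.pt 2 m n \<in> T" "2 dvd (m' - m)" "2 dvd (n' - n)" for m n m' n'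
    proof -
      have "E.pt 2 m' n' - E.pt 2 m n \<in> L" unfolding E.pt_diff LL[symmetric] using that(2,3)
        by (simp add: E.pt_mem)
      thus ?thesis using Tmod that(1) by blast
    qed
    have c1: "E.pt 2 0 1 \<in> T" if "E.pt 2 1 0 \<in> T" using step[OF that] by simp
    have c2: "E.pt 2 1 1 \<in> T" if "E.pt 2 0 1 \<in> T" using pmod[OF step[OF that]] by simp
    have c3: "E.pt 2 1 0 \<in> T" if "E.pt 2 1 1 \<in> T" using pmod[OF step[OF that]] by simp
    have halfs: "\<exists>i j. (i, j) \<in> {(0, 0), (1, 0), (0, 1), (1, 1)} \<and> h - E.pt 2 i j \<in> L" if "2 * h \<in> L" for h
    proof -
      obtain x y where hxy: "h = of_real x * \<alpha> + of_real y * (\<alpha> * e)" by (rule E.coords)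
      have e2: "2 * h = of_real (2 * x) * \<alpha> + of_real (2 * y) * (\<alpha> * e)" unfolding hxy
        by (simp add: algebra_simps)
      have "of_real (2 * x) * \<alpha> + of_real (2 * y) * (\<alpha> * e) \<in> E.L"
        unfolding e2[symmetric] LL by (rule that)
      hence "2 * x \<in> \<int> \<and> 2 * y \<in> \<int>" by (simp only: E.mem)
      hence h2: "2 * x \<in> \<int>" "2 * y \<in> \<int>" by auto
      note mr = E.memr[unfolded LL]
      from half_cases[OF h2(1)] half_cases[OF h2(2)]
      show ?thesis
      proof (elim disjE)
        assume "x \<in> \<int>" "y \<in> \<int>"
        hence "h - E.pt 2 0 0 \<in> L" unfolding hxy using mr[of 2 x y 0 0] by simp
        thus ?thesis by blast
      next
        assume "x - 1/2 \<in> \<int>" "y \<in> \<int>"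
        hence "h - E.pt 2 1 0 \<in> L" unfolding hxy using mr[of 2 x y 1 0] by simp
        thus ?thesis by blast
      next
        assume "x \<in> \<int>" "y - 1/2 \<in> \<int>"
        hence "h - E.pt 2 0 1 \<in> L" unfolding hxy using mr[of 2 x y 0 1] by simp
        thus ?thesis by blast
      next
        assume "x - 1/2 \<in> \<int>" "y - 1/2 \<in> \<int>"
        hence "h - E.pt 2 1 1 \<in> L" unfolding hxy using mr[of 2 x y 1 1] by simp
        thus ?thesis by blast
      qed
    qed
    have neg: "E.pt 2 i j \<in> T" if "s0 - E.pt 2 i j \<in> L" for i j
    proof -
      have "E.pt 2 i j - s0 \<in> L" using Lneg[OF that] by simp
      thus ?thesis using Tmod[OF s0T] by blast
    qed
    have allT: "E.pt 2 1 0 \<in> T \<and> E.pt 2 0 1 \<in> T \<and> E.pt 2 1 1 \<in> T"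
    proof -
      obtain i j where ij: "(i, j) \<in> {(0, 0), (1, 0), (0, 1), (1, 1)}" "s0 - E.pt 2 i j \<in> L"
        using halfs[OF s02] by blast
      have p00: "E.pt 2 0 0 = 0" unfolding E.pt_def by simp
      from ij(1) consider "i = 0 \<and> j = 0" | "i = 1 \<and> j = 0" | "i = 0 \<and> j = 1" | "i = 1 \<and> j = 1" by auto
      thus ?thesis
      proof cases
        case 1 thus ?thesis using ij(2) s0L p00 by simp
      next
        case 2 thus ?thesis using neg[OF ij(2)] c1 c2 by auto
      next
        case 3 thus ?thesis using neg[OF ij(2)] c2 c3 by auto
      next
        case 4 thus ?thesis using neg[OF ij(2)] c3 c1 by auto
      qed
    qed
    have LT: "x \<in> T" if "x \<in> L" for x
    proof -
      have "aff L 1 x = idT L" unfolding idT_def using aff_eq[OF unit_1 unit_1] that by simp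
      thus ?thesis unfolding T_def using idG by simp
    qed
    have BT: "h \<in> T" if h2: "2 * h \<in> L" for h
    proof -
      obtain i j where ij: "(i, j) \<in> {(0, 0), (1, 0), (0, 1), (1, 1)}" "h - E.pt 2 i j \<in> L"
        using halfs[OF h2] by blast
      have p00: "E.pt 2 0 0 = 0" unfolding E.pt_def by simp
      have "E.pt 2 i j \<in> T" using ij(1) allT LT[OF L0] p00 by auto
      thus ?thesis using Tmod ij(2) by blast
    qed
    show ?thesis
    proof
      fix f assume "f \<in> ?H"
      then obtain u b where ub: "f = aff L u b" "u \<in> ?U" "2 * b \<in> L" by blast
      have uu: "lattice_unit L u" using ub(2) pg(1) by blast
      have "f = compT L (aff L 1 b) (aff L u 0)" unfolding ub(1) using uu unit_1 by (simp add: compT_aff)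
      moreover have "aff L 1 b \<in> \<Gamma>" using BT[OF ub(3)] unfolding T_def by simp
      moreover have "aff L u 0 \<in> \<Gamma>" using GsubG e(2) ub(2) by blast
      ultimately show "f \<in> \<Gamma>" using comp by simp
    qed
  qed
  ultimately have \<Gamma>eq: "\<Gamma> = ?H" by blast
  show ?thesis using E.caseK[unfolded E(2), OF E(3) e(1) \<Gamma>eq] .
qed

end

context lat
begin

lemma part3:
  assumes Gs: "aut_subgroup L \<Gamma>" and cG: "cyclic_of_order L G 2" and cK: "cyclic_of_order L K N"
    and sd: "semidir L \<Gamma> G K"
  shows "card (branch_points L \<Gamma>) = 3"
proof -
  have GA: "G \<subseteq> Aut0 L" and KT: "K \<subseteq> transl L" and G\<Gamma>: "\<Gamma> = generated L (G \<union> K)"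
    using sd unfolding semidir_def by blast+
  have GsubG: "G \<subseteq> \<Gamma>" and KsubG: "K \<subseteq> \<Gamma>" using gen_ge[of "G \<union> K" L] G\<Gamma> by auto
  obtain e where e: "lattice_unit L e" "G = (\<lambda>x. aff L x 0) ` range (\<lambda>k. e ^ k)"
    "card (range (\<lambda>k. e ^ k)) = 2" using rot_group[OF cG GA] by blast
  note o = unit_order[OF e(1) e(3)]
  have e1: "e ^ 2 = 1" "e \<noteq> 1" using o(1) o(2)[of 1] by auto
  have "(e - 1) * (e + 1) = 0" using e1(1) by (simp add: power2_eq_square algebra_simps)
  hence "e - 1 = 0 \<or> e + 1 = 0" by (simp only: mult_eq_0_iff)
  hence em: "e = -1" using e1(2) by (auto simp: eq_neg_iff_add_eq_0)
  have rng: "range (\<lambda>k. e ^ k) = {1, -1}"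
  proof -
    have "range (\<lambda>k. e ^ k) = (\<lambda>k. e ^ k) ` {..<2}" using range_pow[OF e1(1)] by simp
    also have "{..<2::nat} = {0, 1}" by auto
    finally show ?thesis using em by simp
  qed
  have Geq: "G = {aff L 1 0, aff L (-1) 0}" using e(2) rng by auto
  obtain t where t: "t \<in> Aut L" "K = cyc L t" "finite K" using cK unfolding cyclic_of_order_def by blast
  have "t \<in> K" using cyc_self[OF t(1)] t(2) by simp
  then obtain b0 where b0: "t = aff L 1 b0" using KT unfolding transl_def by blast
  have Keq: "K = range (\<lambda>k. aff L 1 (of_nat k * b0))"
    unfolding t(2) b0 cyc_def pow_tr by auto
  have "\<not> inj (\<lambda>k. aff L 1 (of_nat k * b0))"
  proof
    assume "inj (\<lambda>k::nat. aff L 1 (of_nat k * b0))"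
    hence "finite (UNIV :: nat set)" using t(3) Keq finite_imageD by metis
    thus False by simp
  qed
  then obtain i j :: nat where ij: "i \<noteq> j" "aff L 1 (of_nat i * b0) = aff L 1 (of_nat j * b0)"
    unfolding inj_def by blast
  have ijL: "of_nat i * b0 - of_nat j * b0 \<in> L" using ij(2) aff_eq[OF unit_1 unit_1] by blast
  obtain d :: nat where d: "d > 0" "of_nat d * b0 \<in> L"
  proof (cases "i < j")
    case True
    have "of_nat (j - i) * b0 = - (of_nat i * b0 - of_nat j * b0)" using True
      by (simp add: of_nat_diff algebra_simps)
    thus thesis using that[of "j - i"] Lneg[OF ijL] True by simp
  next
    case False
    hence "j < i" using ij(1) by simp
    have "of_nat (i - j) * b0 = of_nat i * b0 - of_nat j * b0" using \<open>j < i\<close>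
      by (simp add: of_nat_diff algebra_simps)
    thus thesis using that[of "i - j"] ijL \<open>j < i\<close> by simp
  qed
  define B where "B = {x. \<exists>k::nat. x - of_nat k * b0 \<in> L}"
  have BL: "L \<subseteq> B" unfolding B_def by (auto intro: exI[of _ 0])
  have Ba: "\<forall>x\<in>B. \<forall>y\<in>B. x + y \<in> B"
  proof (intro ballI)
    fix x y assume "x \<in> B" "y \<in> B"
    then obtain k m where km: "x - of_nat k * b0 \<in> L" "y - of_nat m * b0 \<in> L" unfolding B_def by blast
    have eq: "x + y - of_nat (k + m) * b0 = (x - of_nat k * b0) + (y - of_nat m * b0)"
      by (simp add: algebra_simps)
    have "x + y - of_nat (k + m) * b0 \<in> L" unfolding eq by (rule Ladd[OF km])
    thus "x + y \<in> B" unfolding B_def by blast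
  qed
  have Bn: "\<forall>x\<in>B. - x \<in> B"
  proof
    fix x assume "x \<in> B"
    then obtain k where k: "x - of_nat k * b0 \<in> L" unfolding B_def by blast
    have eq: "- x - of_nat (k * (d - 1)) * b0 = - (x - of_nat k * b0) - of_nat k * (of_nat d * b0)"
      using d(1) by (simp add: of_nat_diff algebra_simps)
    have kd: "of_nat k * (of_nat d * b0) \<in> L" using Lnat d(2) by blast
    have "- x - of_nat (k * (d - 1)) * b0 \<in> L" unfolding eq by (rule Ldiff[OF Lneg[OF k] kd])
    thus "- x \<in> B" unfolding B_def by blast
  qed
  have Bd: "\<forall>x\<in>B. of_nat d * x \<in> L"
  proof
    fix x assume "x \<in> B"
    then obtain k where k: "x - of_nat k * b0 \<in> L" unfolding B_def by blast
    have eq: "of_nat d * x = of_nat d * (x - of_nat k * b0) + of_nat k * (of_nat d * b0)"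
      by (simp add: algebra_simps)
    show "of_nat d * x \<in> L" unfolding eq by (rule Ladd[OF Lnat[OF k] Lnat[OF d(2)]])
  qed
  have Uu: "\<forall>u\<in>{1, -1}. lattice_unit L u" using unit_1 unit_m1 by auto
  have U1: "(1::complex) \<in> {1, -1}" by simp
  have Um: "\<forall>u\<in>{1, -1}. \<forall>v\<in>{1, -1}. u * v \<in> {1, -1::complex}" by auto
  have Ui: "\<forall>u\<in>{1, -1}. inverse u \<in> {1, -1::complex}" by auto
  have BU: "\<forall>u\<in>{1, -1}. \<forall>x\<in>B. u * x \<in> B" using Bn by auto
  let ?H = "{aff L u b |u b. u \<in> {1, -1} \<and> b \<in> B}"
  have HS: "aut_subgroup L ?H" using H_subgroup[OF Uu U1 Um Ui BL Ba Bn BU] .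
  have "G \<union> K \<subseteq> ?H"
  proof
    fix f assume "f \<in> G \<union> K"
    then consider "f = aff L 1 0" | "f = aff L (-1) 0" | "f \<in> K" using Geq by blast
    thus "f \<in> ?H"
    proof cases
      case 1 thus ?thesis using BL L0 by blast
    next
      case 2 thus ?thesis using BL L0 by blast
    next
      case 3
      then obtain k where k: "f = aff L 1 (of_nat k * b0)" using Keq by blast
      have "of_nat k * b0 - of_nat k * b0 \<in> L" using L0 by simp
      hence "of_nat k * b0 \<in> B" unfolding B_def by blast
      thus ?thesis using k by blast
    qed
  qed
  hence "\<Gamma> \<subseteq> ?H" using gen_le[OF HS] G\<Gamma> by simp
  moreover have "?H \<subseteq> \<Gamma>"
  proof
    fix f assume "f \<in> ?H"
    then obtain u b where ub: "f = aff L u b" "u \<in> {1, -1}" "b \<in> B" by blast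
    have uu: "lattice_unit L u" using ub(2) Uu by blast
    have "f = compT L (aff L 1 b) (aff L u 0)" unfolding ub(1) using uu unit_1 by (simp add: compT_aff)
    moreover have "aff L u 0 \<in> \<Gamma>" using ub(2) Geq GsubG by auto
    moreover have "aff L 1 b \<in> \<Gamma>"
    proof -
      obtain k where k: "b - of_nat k * b0 \<in> L" using ub(3) unfolding B_def by blast
      have "aff L 1 b = aff L 1 (of_nat k * b0)" using aff_eq[OF unit_1 unit_1] k by simp
      thus ?thesis using KsubG Keq by auto
    qed
    moreover have "compT L (aff L 1 b) (aff L u 0) \<in> \<Gamma>"
      using Gs calculation(2,3) unfolding aut_subgroup_def by blast
    ultimately show "f \<in> \<Gamma>" by simp
  qed
  ultimately have "\<Gamma> = ?H" by blast
  thus ?thesis using caseC2[OF BL Ba Bn d(1) Bd] by simp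
qed

end

theorem lemma4p6:
  fixes \<omega>1 \<omega>2 :: complex and \<Gamma> :: "(complex set \<Rightarrow> complex set) set"
  defines "L \<equiv> lattice \<omega>1 \<omega>2"
  assumes "periods_indep \<omega>1 \<omega>2"
    and "aut_subgroup L \<Gamma>" and "finite \<Gamma>"
  shows "(\<Gamma> \<subseteq> transl L \<longrightarrow> card (branch_points L \<Gamma>) = 0)
    \<and> (((\<exists>G l. l \<in> {3, 4, 6} \<and> cyclic_of_order L G l \<and> semidir L \<Gamma> G {idT L})
         \<or> (\<exists>G K. cyclic_of_order L G 3 \<and> klein_four L K \<and> semidir L \<Gamma> G K))
        \<longrightarrow> card (branch_points L \<Gamma>) = 2)
    \<and> ((\<exists>G K N. N \<ge> 1 \<and> cyclic_of_order L G 2 \<and> cyclic_of_order L K N \<and> semidir L \<Gamma> G K)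
        \<longrightarrow> card (branch_points L \<Gamma>) = 3)"
proof -
  have w1: "\<omega>1 \<noteq> 0" and im: "Im (\<omega>2 / \<omega>1) \<noteq> 0"
    using assms(2) unfolding periods_indep_def by auto
  have D: "Re \<omega>1 * Im \<omega>2 - Im \<omega>1 * Re \<omega>2 \<noteq> 0"
  proof
    assume h: "Re \<omega>1 * Im \<omega>2 - Im \<omega>1 * Re \<omega>2 = 0"
    have "Im (\<omega>2 / \<omega>1) = (Im \<omega>2 * Re \<omega>1 - Re \<omega>2 * Im \<omega>1) / ((Re \<omega>1)\<^sup>2 + (Im \<omega>1)\<^sup>2)"
      by (rule Im_divide)
    also have "Im \<omega>2 * Re \<omega>1 - Re \<omega>2 * Im \<omega>1 = 0" using h by (simp add: algebra_simps)
    finally show False using im by simp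
  qed
  interpret W: lat \<omega>1 \<omega>2 using D by unfold_locales
  have Gs: "aut_subgroup (lattice \<omega>1 \<omega>2) \<Gamma>" using assms(3) unfolding L_def .
  show ?thesis unfolding L_def
  proof (intro conjI impI)
    assume "\<Gamma> \<subseteq> transl (lattice \<omega>1 \<omega>2)"
    thus "card (branch_points (lattice \<omega>1 \<omega>2) \<Gamma>) = 0" by (rule W.part1)
  next
    assume "(\<exists>G l. l \<in> {3, 4, 6} \<and> cyclic_of_order (lattice \<omega>1 \<omega>2) G l \<and>
        semidir (lattice \<omega>1 \<omega>2) \<Gamma> G {idT (lattice \<omega>1 \<omega>2)}) \<or>
      (\<exists>G K. cyclic_of_order (lattice \<omega>1 \<omega>2) G 3 \<and> klein_four (lattice \<omega>1 \<omega>2) K \<and>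
        semidir (lattice \<omega>1 \<omega>2) \<Gamma> G K)"
    thus "card (branch_points (lattice \<omega>1 \<omega>2) \<Gamma>) = 2"
      using W.part2a[OF Gs] W.part2b[OF Gs] by blast
  next
    assume "\<exists>G K N. N \<ge> 1 \<and> cyclic_of_order (lattice \<omega>1 \<omega>2) G 2 \<and>
      cyclic_of_order (lattice \<omega>1 \<omega>2) K N \<and> semidir (lattice \<omega>1 \<omega>2) \<Gamma> G K"
    thus "card (branch_points (lattice \<omega>1 \<omega>2) \<Gamma>) = 3"
      using W.part3[OF Gs] by blast
  qed
qed

end
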